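(* Let $m\ge 2$, $k=2$ (the Bradley--Terry paired comparison model) and $\pi\in\mathbb{R}^m_{>0}$. Then the Lagrangian dual of the problem of minimizing $-\log\det M^{(m)}(\xi)$ over designs $\xi\in\Delta_{\binom{m}{2}}$ simplifies to \[\text{maximize}\quad \log\det\begin{pmatrix}0&-\mathbf{1}^T\\ \mathbf{1}&-\frac{\Gamma(\xi)}{2}\end{pmatrix}\quad\text{subject to } \Gamma(\xi)\le\overline{\Gamma},\] over $\Gamma(\xi)\in\mathcal{C}^m$, where the inequality is entrywise and $\overline{\Gamma}$ is the symmetric $m\times m$ matrix with zero diagonal and $\overline{\Gamma}_{uv}=(m-1)/\lambda_{uv}$ for $u\neq v$, i.e. $\vec{\overline{\Gamma}}=(m-1)L^{-1}R\mathbf{1}$.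
   Context: Bradley--Terry model: alternatives $[m]$ with parameters $\pi_i>0$; choice sets are all pairs $\{u,v\}$, $u<v$, ordered lexicographically; in pair $\{u,v\}$, $u$ is chosen with probability $\pi_u/(\pi_u+\pi_v)$. A design is $\xi=(w_{uv})_{u<v}\in\Delta_{\binom{m}{2}}=\{\xi\ge0:\sum w_{uv}=1\}$. Let $\lambda_{uv}=\pi_u\pi_v/(\pi_u+\pi_v)^2$. The information matrix $M(\xi)$ is the Laplacian of the complete graph on $[m]$ with edge weights $\lambda_{uv}w_{uv}$, i.e. $M_{uv}=-\lambda_{uv}w_{uv}$ for $u\ne v$ and zero row sums; $M^{(m)}(\xi)$ deletes the $m$-th row and column. $\Gamma(\xi)$ is the Farris transform of $\Sigma=M^{(m)}(\xi)^{-1}$: $\Gamma_{uv}=\Sigma_{uu}+\Sigma_{vv}-2\Sigma_{uv}$ for $u,v<m$, $\Gamma_{um}=\Gamma_{mu}=\Sigma_{uu}$, $\Gamma_{mm}=0$. $\mathcal{C}^m$ is the cone of conditionally negative definite symmetric $m\times m$ matrices with zero diagonal. $R=\mathrm{diag}((\pi_u+\pi_v)^2)_{u<v}$, $L=\mathrm{diag}(\pi_u\pi_v)_{u<v}$, and $\vec{\,\cdot\,}$ vectorizes the off-diagonal upper-triangular entries in lexicographic order. *)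

theory Defs
  imports Complex_Main "HOL-Library.Extended_Real" "Jordan_Normal_Form.Determinant" "Jordan_Normal_Form.Gauss_Jordan_Elimination"
begin

text \<open>Conventions: alternatives are indexed 0,...,m-1; the "m-th" alternative of the
paper is index m-1.  A design is a function w with w u v the weight of the pair {u,v},
u < v < m (values outside these pairs are irrelevant).\<close>

definition pairs :: "nat \<Rightarrow> (nat \<times> nat) set" where
  "pairs m = {(u, v). u < v \<and> v < m}"

definition designs :: "nat \<Rightarrow> (nat \<Rightarrow> nat \<Rightarrow> real) set" where
  "designs m = {w. (\<forall>(u, v) \<in> pairs m. w u v \<ge> 0) \<and> (\<Sum>(u, v) \<in> pairs m. w u v) = 1}"

definition bt_lambda :: "(nat \<Rightarrow> real) \<Rightarrow> nat \<Rightarrow> nat \<Rightarrow> real" where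
  "bt_lambda \<pi> u v = \<pi> u * \<pi> v / (\<pi> u + \<pi> v)^2"

definition symw :: "(nat \<Rightarrow> nat \<Rightarrow> real) \<Rightarrow> nat \<Rightarrow> nat \<Rightarrow> real" where
  "symw w i j = (if i < j then w i j else w j i)"

text \<open>Information matrix M(xi): Laplacian of the complete graph on m vertices with
edge weights lambda_uv w_uv.\<close>
definition info_mat :: "nat \<Rightarrow> (nat \<Rightarrow> real) \<Rightarrow> (nat \<Rightarrow> nat \<Rightarrow> real) \<Rightarrow> real mat" where
  "info_mat m \<pi> w = mat m m (\<lambda>(i, j).
     if i = j then (\<Sum>k \<in> {..<m} - {i}. bt_lambda \<pi> i k * symw w i k)
     else - bt_lambda \<pi> i j * symw w i j)"

definition red_info_mat :: "nat \<Rightarrow> (nat \<Rightarrow> real) \<Rightarrow> (nat \<Rightarrow> nat \<Rightarrow> real) \<Rightarrow> real mat" where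
  "red_info_mat m \<pi> w = mat (m - 1) (m - 1) (\<lambda>(i, j). info_mat m \<pi> w $$ (i, j))"

definition mtrace :: "real mat \<Rightarrow> real" where
  "mtrace A = (\<Sum>i < dim_row A. A $$ (i, i))"

definition sym_mats :: "nat \<Rightarrow> real mat set" where
  "sym_mats n = {A \<in> carrier_mat n n. transpose_mat A = A}"

definition pd_mats :: "nat \<Rightarrow> real mat set" where
  "pd_mats n = {A \<in> sym_mats n. \<forall>x \<in> carrier_vec n. x \<noteq> 0\<^sub>v n \<longrightarrow> x \<bullet> (A *\<^sub>v x) > 0}"

definition logdet :: "real mat \<Rightarrow> ereal" where
  "logdet A = (if det A > 0 then ereal (ln (det A)) else -\<infinity>)"

text \<open>Lagrangian of the primal problem
  minimize -log det X  subject to  X = M^(m)(xi), sum w = 1, w >= 0,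
with X ranging over positive definite (m-1)x(m-1) matrices; multipliers:
Z (symmetric) for X = M^(m)(xi), nu for sum w = 1, mu >= 0 for -w <= 0.\<close>
definition lagrangian ::
  "nat \<Rightarrow> (nat \<Rightarrow> real) \<Rightarrow> (nat \<Rightarrow> nat \<Rightarrow> real) \<Rightarrow> real mat \<Rightarrow> real mat \<Rightarrow> real
     \<Rightarrow> (nat \<Rightarrow> nat \<Rightarrow> real) \<Rightarrow> real" where
  "lagrangian m \<pi> w X Z \<nu> \<mu> =
     - ln (det X) + mtrace (Z * (X - red_info_mat m \<pi> w))
     + \<nu> * ((\<Sum>(u, v) \<in> pairs m. w u v) - 1)
     - (\<Sum>(u, v) \<in> pairs m. \<mu> u v * w u v)"

definition dual_function ::
  "nat \<Rightarrow> (nat \<Rightarrow> real) \<Rightarrow> real mat \<Rightarrow> real \<Rightarrow> (nat \<Rightarrow> nat \<Rightarrow> real) \<Rightarrow> ereal" where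
  "dual_function m \<pi> Z \<nu> \<mu> =
     (INF wX \<in> UNIV \<times> pd_mats (m - 1). ereal (lagrangian m \<pi> (fst wX) (snd wX) Z \<nu> \<mu>))"

definition lagrange_dual_value :: "nat \<Rightarrow> (nat \<Rightarrow> real) \<Rightarrow> ereal" where
  "lagrange_dual_value m \<pi> =
     (SUP d \<in> {(Z, \<nu>, \<mu>). Z \<in> sym_mats (m - 1) \<and> (\<forall>(u, v) \<in> pairs m. \<mu> u v \<ge> 0)}.
        dual_function m \<pi> (fst d) (fst (snd d)) (snd (snd d)))"

definition farris :: "nat \<Rightarrow> real mat \<Rightarrow> real mat" where
  "farris m S = mat m m (\<lambda>(u, v).
     if u = v then 0
     else if u < m - 1 \<and> v < m - 1 then S $$ (u, u) + S $$ (v, v) - 2 * S $$ (u, v)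
     else if v = m - 1 then S $$ (u, u) else S $$ (v, v))"

definition Gamma :: "nat \<Rightarrow> (nat \<Rightarrow> real) \<Rightarrow> (nat \<Rightarrow> nat \<Rightarrow> real) \<Rightarrow> real mat" where
  "Gamma m \<pi> w = farris m (the (mat_inverse (red_info_mat m \<pi> w)))"

definition CND_cone :: "nat \<Rightarrow> real mat set" where
  "CND_cone m = {G \<in> sym_mats m. (\<forall>i < m. G $$ (i, i) = 0) \<and>
     (\<forall>x \<in> carrier_vec m. x \<noteq> 0\<^sub>v m \<and> (\<Sum>i < m. x $ i) = 0 \<longrightarrow> x \<bullet> (G *\<^sub>v x) < 0)}"

definition Gamma_bar :: "nat \<Rightarrow> (nat \<Rightarrow> real) \<Rightarrow> real mat" where
  "Gamma_bar m \<pi> = mat m m (\<lambda>(u, v). if u = v then 0 else real (m - 1) / bt_lambda \<pi> u v)"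

definition bordered :: "nat \<Rightarrow> real mat \<Rightarrow> real mat" where
  "bordered m G = mat (m + 1) (m + 1) (\<lambda>(i, j).
     if i = 0 \<and> j = 0 then 0 else if i = 0 then -1 else if j = 0 then 1
     else - G $$ (i - 1, j - 1) / 2)"

definition simplified_dual_value :: "nat \<Rightarrow> (nat \<Rightarrow> real) \<Rightarrow> ereal" where
  "simplified_dual_value m \<pi> =
     (SUP G \<in> {G \<in> CND_cone m. \<forall>u < m. \<forall>v < m. G $$ (u, v) \<le> Gamma_bar m \<pi> $$ (u, v)}.
        logdet (bordered m G))"

end

theory Submission
  imports Defs
begin
definition qf :: "nat \<Rightarrow> (nat \<Rightarrow> nat \<Rightarrow> real) \<Rightarrow> (nat \<Rightarrow> real) \<Rightarrow> real" where
  "qf n A x = (\<Sum>i<n. \<Sum>j<n. x i * A i j * x j)"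

definition PDf :: "nat \<Rightarrow> (nat \<Rightarrow> nat \<Rightarrow> real) \<Rightarrow> bool" where
  "PDf n A \<longleftrightarrow> (\<forall>i<n. \<forall>j<n. A i j = A j i) \<and> (\<forall>x. (\<exists>i<n. x i \<noteq> 0) \<longrightarrow> qf n A x > 0)"

lemma qf_delta: assumes "k < n" shows "qf n A (\<lambda>i. if i = k then 1 else 0) = A k k"
proof -
  have "qf n A (\<lambda>i. if i = k then 1 else 0) = (\<Sum>i<n. \<Sum>j<n. if i = k \<and> j = k then A k k else 0)"
    unfolding qf_def by (intro sum.cong refl) auto
  also have "\<dots> = (\<Sum>i<n. if i = k then A k k else 0)"
    by (intro sum.cong refl) (auto simp: assms)
  also have "\<dots> = A k k" using assms by simp
  finally show ?thesis .
qed

lemma chol_UUT: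
  "PDf n A \<Longrightarrow> \<exists>U. (\<forall>i j. j < i \<longrightarrow> U i j = 0) \<and> (\<forall>i<n. U i i > 0) \<and>
      (\<forall>i<n. \<forall>j<n. A i j = (\<Sum>k<n. U i k * U j k))"
proof (induction n arbitrary: A)
  case 0
  show ?case by (rule exI[of _ "\<lambda>i j. 0"]) auto
next
  case (Suc n)
  have symA: "\<And>i j. i < Suc n \<Longrightarrow> j < Suc n \<Longrightarrow> A i j = A j i"
    using Suc.prems unfolding PDf_def by auto
  have posA: "\<And>x. (\<exists>i<Suc n. x i \<noteq> 0) \<Longrightarrow> qf (Suc n) A x > 0"
    using Suc.prems unfolding PDf_def by auto
  define a where "a = A n n"
  have a: "a > 0" using posA[of "\<lambda>i. if i = n then 1 else 0"] qf_delta[of n "Suc n" A]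
    unfolding a_def by auto
  define C where "C = (\<lambda>i j. A i j - A i n * A n j / a)"
  have "PDf n C"
    unfolding PDf_def
  proof (intro conjI allI impI)
    fix i j assume "i < n" "j < n"
    then show "C i j = C j i" unfolding C_def using symA[of i j] symA[of i n] symA[of n j] by auto
  next
    fix y :: "nat \<Rightarrow> real" assume y: "\<exists>i<n. y i \<noteq> 0"
    define s where "s = (\<Sum>j<n. A n j * y j)"
    define t where "t = - s / a"
    define x where "x = (\<lambda>i. if i < n then y i else if i = n then t else 0)"
    define Q where "Q = (\<Sum>i<n. \<Sum>j<n. y i * A i j * y j)"
    have s2: "(\<Sum>i<n. y i * A i n) = s" unfolding s_def
      by (intro sum.cong refl) (simp add: symA)
    have "qf (Suc n) A x = (\<Sum>i<n. (\<Sum>j<n. x i * A i j * x j) + x i * A i n * x n)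
        + ((\<Sum>j<n. x n * A n j * x j) + x n * A n n * x n)"
      unfolding qf_def by simp
    also have "\<dots> = (\<Sum>i<n. (\<Sum>j<n. y i * A i j * y j) + y i * A i n * t)
        + ((\<Sum>j<n. t * A n j * y j) + t * a * t)"
      unfolding x_def a_def by simp
    also have "\<dots> = Q + t * (\<Sum>i<n. y i * A i n) + t * s + t * a * t"
      unfolding Q_def s_def by (simp add: sum.distrib sum_distrib_left algebra_simps)
    also have "\<dots> = Q - s * s / a"
      unfolding s2 t_def using a by (simp add: field_simps)
    finally have 1: "qf (Suc n) A x = Q - s * s / a" .
    have "qf n C y = (\<Sum>i<n. \<Sum>j<n. y i * A i j * y j - (y i * A i n) * (A n j * y j) / a)"
      unfolding qf_def C_def by (intro sum.cong refl) (simp add: algebra_simps)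
    also have "\<dots> = Q - (\<Sum>i<n. \<Sum>j<n. (y i * A i n) * (A n j * y j) / a)"
      unfolding Q_def by (simp add: sum_subtractf)
    also have "(\<Sum>i<n. \<Sum>j<n. (y i * A i n) * (A n j * y j) / a) = (\<Sum>i<n. y i * A i n) * s / a"
      unfolding s_def sum_product sum_divide_distrib by simp
    finally have 2: "qf n C y = Q - s * s / a" unfolding s2 .
    from y obtain i where "i < n" "y i \<noteq> 0" by auto
    then have "\<exists>i<Suc n. x i \<noteq> 0" unfolding x_def by (intro exI[of _ i]) auto
    from posA[OF this] show "qf n C y > 0" using 1 2 by simp
  qed
  from Suc.IH[OF this] obtain U' where U': "\<forall>i j. j < i \<longrightarrow> U' i j = 0" "\<forall>i<n. U' i i > 0"
    "\<forall>i<n. \<forall>j<n. C i j = (\<Sum>k<n. U' i k * U' j k)" by blast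
  define U where "U = (\<lambda>i j. if j < n then (if i < n then U' i j else 0)
      else if j = n \<and> i \<le> n then A i n / sqrt a else 0)"
  show ?case
  proof (intro exI[of _ U] conjI allI impI)
    fix i j :: nat assume "j < i" then show "U i j = 0" unfolding U_def using U'(1) by auto
  next
    fix i assume "i < Suc n" then show "U i i > 0" unfolding U_def using U'(2) a
      by (auto simp: a_def[symmetric] less_Suc_eq)
  next
    fix i j assume ij: "i < Suc n" "j < Suc n"
    have "(\<Sum>k<Suc n. U i k * U j k) = (\<Sum>k<n. U i k * U j k) + U i n * U j n" by simp
    also have "\<dots> = A i j"
    proof (cases "i < n")
      case True
      show ?thesis
      proof (cases "j < n")
        case True
        have "(\<Sum>k<n. U i k * U j k) = C i j" using U'(3) \<open>i < n\<close> True unfolding U_def by simp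
        then show ?thesis unfolding C_def U_def using \<open>i < n\<close> True a symA[of n j]
          by (simp add: field_simps real_sqrt_mult[symmetric])
      next
        case False
        then have "j = n" using ij by auto
        have "(\<Sum>k<n. U i k * U j k) = 0" unfolding U_def using \<open>j = n\<close> by simp
        then show ?thesis unfolding U_def using \<open>i < n\<close> \<open>j = n\<close> a
          by (simp add: field_simps a_def)
      qed
    next
      case False
      then have "i = n" using ij by auto
      have "(\<Sum>k<n. U i k * U j k) = 0" unfolding U_def using \<open>i = n\<close> by simp
      then show ?thesis unfolding U_def using \<open>i = n\<close> a ij symA[of j n]
        by (simp add: field_simps a_def)
    qed
    finally show "A i j = (\<Sum>k<Suc n. U i k * U j k)" by simp
  qed
qed

lemma chol_RTR:
  assumes "PDf n A"
  shows "\<exists>R. (\<forall>i j. j < i \<longrightarrow> R i j = 0) \<and> (\<forall>i<n. R i i > 0) \<and>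
      (\<forall>i<n. \<forall>j<n. A i j = (\<Sum>k<n. R k i * R k j))"
proof -
  define A' where "A' = (\<lambda>i j. A (n - Suc i) (n - Suc j))"
  have re: "(\<Sum>i<n. f (n - Suc i)) = (\<Sum>i<n. f i)" for f :: "nat \<Rightarrow> real"
    by (rule sum.nat_diff_reindex)
  have "PDf n A'" unfolding PDf_def
  proof (intro conjI allI impI)
    fix i j assume "i < n" "j < n" then show "A' i j = A' j i"
      using assms unfolding PDf_def A'_def by auto
  next
    fix x :: "nat \<Rightarrow> real" assume "\<exists>i<n. x i \<noteq> 0"
    then obtain i where i: "i < n" "x i \<noteq> 0" by auto
    have rv: "\<And>i. i < n \<Longrightarrow> n - Suc (n - Suc i) = i" by arith
    have "qf n A (\<lambda>i. x (n - Suc i)) = (\<Sum>i<n. \<Sum>j<n. x (n - Suc i) * A i j * x (n - Suc j))"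
      by (simp add: qf_def)
    also have "\<dots> = (\<Sum>i<n. \<Sum>j<n. x (n - Suc (n - Suc i)) * A (n - Suc i) j * x (n - Suc j))"
      by (rule re[of "\<lambda>i. \<Sum>j<n. x (n - Suc i) * A i j * x (n - Suc j)", symmetric])
    also have "\<dots> = (\<Sum>i<n. \<Sum>j<n. x i * A (n - Suc i) j * x (n - Suc j))"
      by (intro sum.cong refl) (simp add: rv)
    also have "\<dots> = (\<Sum>i<n. \<Sum>j<n. x i * A (n - Suc i) (n - Suc j) * x (n - Suc (n - Suc j)))"
      by (intro sum.cong refl re[symmetric])
    also have "\<dots> = qf n A' x"
      unfolding qf_def A'_def by (intro sum.cong refl) (simp add: rv)
    finally have eq: "qf n A (\<lambda>i. x (n - Suc i)) = qf n A' x" .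
    have "n - Suc i < n" "x (n - Suc (n - Suc i)) \<noteq> 0" using i rv by auto
    then have "\<exists>j<n. x (n - Suc j) \<noteq> 0" by blast
    moreover have "\<And>y. (\<exists>i<n. y i \<noteq> 0) \<Longrightarrow> qf n A y > 0"
      using assms unfolding PDf_def by simp
    ultimately have "qf n A (\<lambda>i. x (n - Suc i)) > 0" by simp
    then show "qf n A' x > 0" using eq by simp
  qed
  from chol_UUT[OF this] obtain U where U: "\<forall>i j. j < i \<longrightarrow> U i j = 0" "\<forall>i<n. U i i > 0"
    "\<forall>i<n. \<forall>j<n. A' i j = (\<Sum>k<n. U i k * U j k)" by blast
  define R where "R = (\<lambda>k i. if k < n \<and> i < n then U (n - Suc i) (n - Suc k) else 0)"
  show ?thesis
  proof (intro exI[of _ R] conjI allI impI)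
    fix i j :: nat assume "j < i" then show "R i j = 0" unfolding R_def using U(1) by auto
  next
    fix i assume "i < n" then show "R i i > 0" unfolding R_def using U(2) by auto
  next
    fix i j assume ij: "i < n" "j < n"
    have "A i j = A' (n - Suc i) (n - Suc j)" unfolding A'_def using ij by (simp add: Suc_diff_Suc)
    also have "\<dots> = (\<Sum>k<n. U (n - Suc i) k * U (n - Suc j) k)" using U(3) ij by simp
    also have "\<dots> = (\<Sum>k<n. U (n - Suc i) (n - Suc k) * U (n - Suc j) (n - Suc k))"
      by (rule re[symmetric])
    also have "\<dots> = (\<Sum>k<n. R k i * R k j)" unfolding R_def using ij by (intro sum.cong refl) auto
    finally show "A i j = (\<Sum>k<n. R k i * R k j)" .
  qed
qed

lemma carrier_pd: "Z \<in> pd_mats n \<Longrightarrow> Z \<in> carrier_mat n n"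
  unfolding pd_mats_def sym_mats_def by auto

lemma qf_vec: assumes A: "A \<in> carrier_mat n n" and x: "x \<in> carrier_vec n"
  shows "x \<bullet> (A *\<^sub>v x) = qf n (\<lambda>i j. A $$ (i,j)) (\<lambda>i. x $ i)"
proof -
  have "x \<bullet> (A *\<^sub>v x) = (\<Sum>i<n. x $ i * (\<Sum>j<n. A $$ (i,j) * x $ j))"
    using A x by (auto simp: scalar_prod_def atLeast0LessThan intro!: sum.cong)
  also have "\<dots> = qf n (\<lambda>i j. A $$ (i,j)) (\<lambda>i. x $ i)"
    unfolding qf_def by (simp add: sum_distrib_left mult.assoc)
  finally show ?thesis .
qed

lemma pd_PDf: assumes "Z \<in> pd_mats n" shows "PDf n (\<lambda>i j. Z $$ (i,j))"
proof -
  have Z: "Z \<in> carrier_mat n n" "transpose_mat Z = Z"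
    and pos: "\<And>v. v \<in> carrier_vec n \<Longrightarrow> v \<noteq> 0\<^sub>v n \<Longrightarrow> v \<bullet> (Z *\<^sub>v v) > 0"
    using assms unfolding pd_mats_def sym_mats_def by auto
  show ?thesis unfolding PDf_def
  proof (intro conjI allI impI)
    fix i j assume ij: "i < n" "j < n"
    have "transpose_mat Z $$ (i,j) = Z $$ (j,i)" using Z(1) ij by simp
    then show "Z $$ (i,j) = Z $$ (j,i)" using Z(2) by simp
  next
    fix x :: "nat \<Rightarrow> real" assume "\<exists>i<n. x i \<noteq> 0"
    then obtain i where i: "i < n" "x i \<noteq> 0" by auto
    define v where "v = vec n x"
    have v: "v \<in> carrier_vec n" unfolding v_def by simp
    have "v \<noteq> 0\<^sub>v n"
    proof
      assume "v = 0\<^sub>v n"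
      then have "v $ i = 0" using i by simp
      then show False using i unfolding v_def by simp
    qed
    from pos[OF v this] have "qf n (\<lambda>i j. Z $$ (i,j)) (\<lambda>i. v $ i) > 0"
      using qf_vec[OF Z(1) v] by simp
    moreover have "qf n (\<lambda>i j. Z $$ (i,j)) (\<lambda>i. v $ i) = qf n (\<lambda>i j. Z $$ (i,j)) x"
      unfolding qf_def v_def by (intro sum.cong refl) auto
    ultimately show "qf n (\<lambda>i j. Z $$ (i,j)) x > 0" by simp
  qed
qed

lemma PDf_pd: assumes Z: "Z \<in> carrier_mat n n" and P: "PDf n (\<lambda>i j. Z $$ (i,j))"
  shows "Z \<in> pd_mats n"
proof -
  have "transpose_mat Z = Z"
    using P Z unfolding PDf_def by (intro eq_matI) auto
  moreover have "v \<bullet> (Z *\<^sub>v v) > 0" if v: "v \<in> carrier_vec n" "v \<noteq> 0\<^sub>v n" for v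
  proof -
    have "\<exists>i<n. v $ i \<noteq> 0"
    proof (rule ccontr)
      assume "\<not> ?thesis"
      then have "v = 0\<^sub>v n" using v by (intro eq_vecI) auto
      then show False using v by simp
    qed
    then show ?thesis using P qf_vec[OF Z v(1)] unfolding PDf_def by simp
  qed
  ultimately show ?thesis using Z unfolding pd_mats_def sym_mats_def by auto
qed

lemma det_upper_prod: assumes "\<forall>i j. j < i \<longrightarrow> R i j = 0"
  shows "det (mat n n (\<lambda>(i,j). R i j)) = (\<Prod>i<n. R i i)"
proof -
  have "upper_triangular (mat n n (\<lambda>(i,j). R i j))"
    unfolding upper_triangular_def using assms by auto
  from det_upper_triangular[OF this, of n]
  have "det (mat n n (\<lambda>(i,j). R i j)) = prod_list (map (\<lambda>i. R i i) [0..<n])"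
    unfolding diag_mat_def by (simp, intro arg_cong[where f=prod_list] map_cong) auto
  also have "\<dots> = (\<Prod>i<n. R i i)"
    by (subst prod.distinct_set_conv_list[symmetric]) (auto simp: atLeast0LessThan)
  finally show ?thesis .
qed

lemma gram_RTR_eq: assumes X: "X \<in> carrier_mat n n"
  and XR: "\<forall>i<n. \<forall>j<n. X $$ (i,j) = (\<Sum>k<n. R k i * R k j)"
  shows "X = transpose_mat (mat n n (\<lambda>(i,j). R i j)) * mat n n (\<lambda>(i,j). R i j)"
  using X XR by (intro eq_matI) (auto simp: scalar_prod_def atLeast0LessThan intro!: sum.cong)

lemma gram_UUT_eq: assumes X: "X \<in> carrier_mat n n"
  and XR: "\<forall>i<n. \<forall>j<n. X $$ (i,j) = (\<Sum>k<n. U i k * U j k)"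
  shows "X = mat n n (\<lambda>(i,j). U i j) * transpose_mat (mat n n (\<lambda>(i,j). U i j))"
  using X XR by (intro eq_matI) (auto simp: scalar_prod_def atLeast0LessThan intro!: sum.cong)

lemma gram_RTR_det: assumes X: "X \<in> carrier_mat n n"
  and XR: "\<forall>i<n. \<forall>j<n. X $$ (i,j) = (\<Sum>k<n. R k i * R k j)"
  and up: "\<forall>i j. j < i \<longrightarrow> R i j = 0"
  shows "det X = (\<Prod>i<n. R i i)^2"
proof -
  let ?R = "mat n n (\<lambda>(i,j). R i j)"
  have R: "?R \<in> carrier_mat n n" by simp
  have "det X = det (transpose_mat ?R) * det ?R"
    by (subst gram_RTR_eq[OF X XR]) (rule det_mult[of _ n], auto)
  also have "\<dots> = det ?R ^ 2" using det_transpose[OF R] by (simp add: power2_eq_square)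
  finally show ?thesis using det_upper_prod[OF up] by simp
qed

lemma gram_UUT_det: assumes X: "X \<in> carrier_mat n n"
  and XR: "\<forall>i<n. \<forall>j<n. X $$ (i,j) = (\<Sum>k<n. U i k * U j k)"
  and up: "\<forall>i j. j < i \<longrightarrow> U i j = 0"
  shows "det X = (\<Prod>i<n. U i i)^2"
proof -
  let ?R = "mat n n (\<lambda>(i,j). U i j)"
  have R: "?R \<in> carrier_mat n n" by simp
  have "det X = det ?R * det (transpose_mat ?R)"
    by (subst gram_UUT_eq[OF X XR]) (rule det_mult[of _ n], auto)
  also have "\<dots> = det ?R ^ 2" using det_transpose[OF R] by (simp add: power2_eq_square)
  finally show ?thesis using det_upper_prod[OF up] by simp
qed

lemma gram_sumsq: fixes R :: "nat \<Rightarrow> nat \<Rightarrow> real" and n :: nat shows "(\<Sum>i<n. \<Sum>j<n. x i * (\<Sum>k<n. R k i * R k j) * x j) = (\<Sum>k<n. (\<Sum>i<n. R k i * x i)^2)"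
proof -
  have "(\<Sum>i<n. \<Sum>j<n. x i * (\<Sum>k<n. R k i * R k j) * x j) = (\<Sum>i<n. \<Sum>j<n. \<Sum>k<n. (R k i * x i) * (R k j * x j))"
    unfolding sum_distrib_left sum_distrib_right by (intro sum.cong refl) (simp add: mult_ac)
  also have "\<dots> = (\<Sum>i<n. \<Sum>k<n. \<Sum>j<n. (R k i * x i) * (R k j * x j))"
    by (intro sum.cong refl sum.swap)
  also have "\<dots> = (\<Sum>k<n. \<Sum>i<n. \<Sum>j<n. (R k i * x i) * (R k j * x j))"
    by (rule sum.swap)
  also have "\<dots> = (\<Sum>k<n. (\<Sum>i<n. R k i * x i)^2)"
    by (simp add: power2_eq_square sum_product)
  finally show ?thesis .
qed

lemma gram_pos: fixes R :: "nat \<Rightarrow> nat \<Rightarrow> real" and n :: nat assumes up: "\<forall>i j. j < i \<longrightarrow> R i j = 0" and d: "\<forall>i<n. R i i \<noteq> 0"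
  and x: "\<exists>i<n. x i \<noteq> 0"
  shows "(\<Sum>i<n. \<Sum>j<n. x i * (\<Sum>k<n. R k i * R k j) * x j) > (0::real)"
proof -
  define S where "S = {i. i < n \<and> x i \<noteq> 0}"
  have fS1: "finite S" unfolding S_def by (rule finite_subset[of _ "{..<n}"]) auto
  have fS: "finite S" "S \<noteq> {}" using fS1 unfolding S_def using x by auto
  define i0 where "i0 = Max S"
  have i0: "i0 \<in> S" unfolding i0_def using fS by simp
  have gt: "x i = 0" if "i0 < i" "i < n" for i
  proof (rule ccontr)
    assume "x i \<noteq> 0" then have "i \<in> S" using that unfolding S_def by auto
    then have "i \<le> i0" unfolding i0_def using fS by simp
    then show False using that by simp
  qed
  have "(\<Sum>i<n. R i0 i * x i) = (\<Sum>i<n. if i = i0 then R i0 i0 * x i0 else 0)"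
  proof (intro sum.cong refl)
    fix i assume "i \<in> {..<n}"
    then show "R i0 i * x i = (if i = i0 then R i0 i0 * x i0 else 0)"
      using up gt[of i] by (cases "i < i0") (auto simp: not_less_iff_gr_or_eq)
  qed
  also have "\<dots> = R i0 i0 * x i0" using i0 unfolding S_def by simp
  finally have e: "(\<Sum>i<n. R i0 i * x i) = R i0 i0 * x i0" .
  have "0 < (\<Sum>i<n. R i0 i * x i)^2" unfolding e using i0 d unfolding S_def by simp
  also have "\<dots> \<le> (\<Sum>k<n. (\<Sum>i<n. R k i * x i)^2)"
    by (rule member_le_sum[of i0]) (use i0 in \<open>auto simp: S_def\<close>)
  finally show ?thesis unfolding gram_sumsq .
qed

lemma gram_pd: assumes X: "X \<in> carrier_mat n n"
  and XR: "\<forall>i<n. \<forall>j<n. X $$ (i,j) = (\<Sum>k<n. R k i * R k j)"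
  and up: "\<forall>i j. j < i \<longrightarrow> R i j = 0" and d: "\<forall>i<n. R i i \<noteq> 0"
  shows "X \<in> pd_mats n"
proof (rule PDf_pd[OF X])
  show "PDf n (\<lambda>i j. X $$ (i,j))" unfolding PDf_def
  proof (intro conjI allI impI)
    fix i j assume "i < n" "j < n" then show "X $$ (i,j) = X $$ (j,i)"
      using XR by (simp add: mult.commute)
  next
    fix x :: "nat \<Rightarrow> real" assume x: "\<exists>i<n. x i \<noteq> 0"
    have "qf n (\<lambda>i j. X $$ (i,j)) x = (\<Sum>i<n. \<Sum>j<n. x i * (\<Sum>k<n. R k i * R k j) * x j)"
      unfolding qf_def using XR by (intro sum.cong refl) auto
    then show "qf n (\<lambda>i j. X $$ (i,j)) x > 0" using gram_pos[OF up d x] by simp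
  qed
qed

lemma pd_det_pos: assumes "Z \<in> pd_mats n" shows "det Z > 0"
proof -
  from chol_RTR[OF pd_PDf[OF assms]] obtain R where R: "\<forall>i j. j < i \<longrightarrow> R i j = 0"
    "\<forall>i<n. R i i > 0" "\<forall>i<n. \<forall>j<n. Z $$ (i,j) = (\<Sum>k<n. R k i * R k j)" by blast
  have "det Z = (\<Prod>i<n. R i i)^2" using gram_RTR_det[OF carrier_pd[OF assms] R(3) R(1)] .
  moreover have "(\<Prod>i<n. R i i) > 0" using R(2) by (intro prod_pos) auto
  ultimately show ?thesis by (metis zero_less_power)
qed

lemma mtrace_mult: assumes "Z \<in> carrier_mat n n" "X \<in> carrier_mat n n"
  shows "mtrace (Z * X) = (\<Sum>i<n. \<Sum>j<n. Z $$ (i,j) * X $$ (j,i))"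
  unfolding mtrace_def using assms
  by (auto simp: scalar_prod_def atLeast0LessThan intro!: sum.cong)

lemma trace_rearr: fixes R U :: "nat \<Rightarrow> nat \<Rightarrow> real" and n :: nat shows
  "(\<Sum>i<n. \<Sum>j<n. (\<Sum>k<n. R k i * R k j) * (\<Sum>l<n. U j l * U i l)) =
   (\<Sum>k<n. \<Sum>l<n. (\<Sum>i<n. R k i * U i l)^2)"
proof -
  have "(\<Sum>i<n. \<Sum>j<n. (\<Sum>k<n. R k i * R k j) * (\<Sum>l<n. U j l * U i l)) =
     (\<Sum>i<n. \<Sum>j<n. \<Sum>k<n. \<Sum>l<n. (R k i * U i l) * (R k j * U j l))"
    unfolding sum_product by (intro sum.cong refl) (simp add: mult_ac)
  also have "\<dots> = (\<Sum>i<n. \<Sum>k<n. \<Sum>j<n. \<Sum>l<n. (R k i * U i l) * (R k j * U j l))"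
    by (intro sum.cong refl sum.swap)
  also have "\<dots> = (\<Sum>k<n. \<Sum>i<n. \<Sum>j<n. \<Sum>l<n. (R k i * U i l) * (R k j * U j l))"
    by (rule sum.swap)
  also have "\<dots> = (\<Sum>k<n. \<Sum>i<n. \<Sum>l<n. \<Sum>j<n. (R k i * U i l) * (R k j * U j l))"
    by (intro sum.cong refl sum.swap)
  also have "\<dots> = (\<Sum>k<n. \<Sum>l<n. \<Sum>i<n. \<Sum>j<n. (R k i * U i l) * (R k j * U j l))"
    by (intro sum.cong refl sum.swap)
  also have "\<dots> = (\<Sum>k<n. \<Sum>l<n. (\<Sum>i<n. R k i * U i l)^2)"
    by (simp add: power2_eq_square sum_product)
  finally show ?thesis .
qed

lemma KL: assumes Z: "Z \<in> pd_mats n" and X: "X \<in> pd_mats n"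
  shows "ln (det Z) + ln (det X) \<le> mtrace (Z * X) - real n"
proof -
  from chol_RTR[OF pd_PDf[OF Z]] obtain R where R: "\<forall>i j. j < i \<longrightarrow> R i j = 0"
    "\<forall>i<n. R i i > 0" "\<forall>i<n. \<forall>j<n. Z $$ (i,j) = (\<Sum>k<n. R k i * R k j)" by blast
  from chol_UUT[OF pd_PDf[OF X]] obtain U where U: "\<forall>i j. j < i \<longrightarrow> U i j = 0"
    "\<forall>i<n. U i i > 0" "\<forall>i<n. \<forall>j<n. X $$ (i,j) = (\<Sum>k<n. U i k * U j k)" by blast
  have dZ: "det Z = (\<Prod>i<n. (R i i)^2)"
    using gram_RTR_det[OF carrier_pd[OF Z] R(3) R(1)] by (simp add: prod_power_distrib)
  have dX: "det X = (\<Prod>i<n. (U i i)^2)"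
    using gram_UUT_det[OF carrier_pd[OF X] U(3) U(1)] by (simp add: prod_power_distrib)
  define T where "T = (\<lambda>k l. \<Sum>i<n. R k i * U i l)"
  have Tkk: "T k k = R k k * U k k" if "k < n" for k
  proof -
    have "T k k = (\<Sum>i<n. if i = k then R k k * U k k else 0)"
      unfolding T_def
    proof (intro sum.cong refl)
      fix i assume "i \<in> {..<n}"
      show "R k i * U i k = (if i = k then R k k * U k k else 0)"
        using R(1) U(1) by (cases "i < k") (auto simp: not_less_iff_gr_or_eq)
    qed
    also have "\<dots> = R k k * U k k" using that by simp
    finally show ?thesis .
  qed
  have tr: "mtrace (Z * X) = (\<Sum>k<n. \<Sum>l<n. (T k l)^2)"
    unfolding mtrace_mult[OF carrier_pd[OF Z] carrier_pd[OF X]] T_def trace_rearr[symmetric]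
    using R(3) U(3) by (intro sum.cong refl) auto
  have "(\<Sum>k<n. (T k k)^2) \<le> (\<Sum>k<n. \<Sum>l<n. (T k l)^2)"
    by (intro sum_mono member_le_sum) auto
  have "ln (\<Prod>i<n. (R i i)^2) = (\<Sum>i<n. ln ((R i i)^2))" using R(2) by (intro ln_prod) auto
  moreover have "ln (\<Prod>i<n. (U i i)^2) = (\<Sum>i<n. ln ((U i i)^2))" using U(2) by (intro ln_prod) auto
  ultimately have "ln (det Z) + ln (det X) = (\<Sum>i<n. ln ((R i i)^2)) + (\<Sum>i<n. ln ((U i i)^2))"
    unfolding dZ dX by simp
  also have "\<dots> = (\<Sum>i<n. ln ((T i i)^2))"
    unfolding sum.distrib[symmetric]
  proof (intro sum.cong refl)
    fix i assume "i \<in> {..<n}"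
    then have "R i i > 0" "U i i > 0" using R(2) U(2) by auto
    then show "ln ((R i i)^2) + ln ((U i i)^2) = ln ((T i i)^2)"
      using Tkk[of i] \<open>i \<in> {..<n}\<close> ln_mult[of "(R i i)^2" "(U i i)^2"]
      by (simp add: power_mult_distrib)
  qed
  also have "\<dots> \<le> (\<Sum>i<n. (T i i)^2 - 1)"
  proof (intro sum_mono ln_le_minus_one)
    fix i assume "i \<in> {..<n}"
    then have "R i i > 0" "U i i > 0" using R(2) U(2) by auto
    then show "0 < (T i i)^2" using Tkk[of i] \<open>i \<in> {..<n}\<close> by simp
  qed
  also have "\<dots> = (\<Sum>k<n. (T k k)^2) - real n" by (simp add: sum_subtractf)
  also have "\<dots> \<le> mtrace (Z * X) - real n"
    unfolding tr using \<open>(\<Sum>k<n. (T k k)^2) \<le> _\<close> by simp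
  finally show ?thesis .
qed

definition Zt :: "nat \<Rightarrow> real mat \<Rightarrow> nat \<Rightarrow> nat \<Rightarrow> real" where
  "Zt n Z i j = (if i < n \<and> j < n then Z $$ (i,j) else 0)"

lemma farris_carrier: "farris m Z \<in> carrier_mat m m"
  unfolding farris_def by simp

lemma farris_idx: assumes "u < Suc n" "v < Suc n"
  shows "farris (Suc n) Z $$ (u,v) = Zt n Z u u + Zt n Z v v - 2 * Zt n Z u v"
  using assms unfolding farris_def Zt_def by (auto simp: less_Suc_eq)

lemma Zt_sym: assumes "\<forall>i<n. \<forall>j<n. Z $$ (i,j) = Z $$ (j,i)"
  shows "Zt n Z i j = Zt n Z j i"
  using assms unfolding Zt_def by auto

lemma sum_Suc_Zt: fixes y :: "nat \<Rightarrow> real"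
  shows "(\<Sum>u<Suc n. \<Sum>v<Suc n. y u * Zt n Z u v * y v) = qf n (\<lambda>i j. Z $$ (i,j)) y"
  unfolding qf_def by (simp add: Zt_def)

lemma quad_split: fixes a b y :: "nat \<Rightarrow> real" and c :: "nat \<Rightarrow> nat \<Rightarrow> real"
  shows "(\<Sum>u\<in>A. \<Sum>v\<in>A. a u * y v + y u * b v - 2 * c u v) =
    (\<Sum>u\<in>A. a u) * (\<Sum>v\<in>A. y v) + (\<Sum>u\<in>A. y u) * (\<Sum>v\<in>A. b v) - 2 * (\<Sum>u\<in>A. \<Sum>v\<in>A. c u v)"
proof -
  have 1: "(\<Sum>u\<in>A. \<Sum>v\<in>A. a u * y v) = (\<Sum>u\<in>A. a u) * (\<Sum>v\<in>A. y v)" by (rule sum_product[symmetric])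
  have 2: "(\<Sum>u\<in>A. \<Sum>v\<in>A. y u * b v) = (\<Sum>u\<in>A. y u) * (\<Sum>v\<in>A. b v)" by (rule sum_product[symmetric])
  have "(\<Sum>u\<in>A. \<Sum>v\<in>A. a u * y v + y u * b v - 2 * c u v) =
    (\<Sum>u\<in>A. \<Sum>v\<in>A. a u * y v) + (\<Sum>u\<in>A. \<Sum>v\<in>A. y u * b v) - 2 * (\<Sum>u\<in>A. \<Sum>v\<in>A. c u v)"
    by (simp add: sum.distrib sum_subtractf sum_distrib_left)
  then show ?thesis unfolding 1 2 .
qed

lemma farris_quad: fixes y :: "nat \<Rightarrow> real"
  shows "(\<Sum>u<Suc n. \<Sum>v<Suc n. y u * farris (Suc n) Z $$ (u,v) * y v) =
    2 * (\<Sum>u<Suc n. y u) * (\<Sum>u<Suc n. y u * Zt n Z u u) - 2 * qf n (\<lambda>i j. Z $$ (i,j)) y"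
proof -
  let ?Z = "Zt n Z"
  have "(\<Sum>u<Suc n. \<Sum>v<Suc n. y u * farris (Suc n) Z $$ (u,v) * y v) =
     (\<Sum>u<Suc n. \<Sum>v<Suc n. (y u * ?Z u u) * y v + y u * (?Z v v * y v) - 2 * (y u * ?Z u v * y v))"
    by (intro sum.cong refl) (simp add: farris_idx algebra_simps)
  also have "\<dots> = (\<Sum>u<Suc n. y u * ?Z u u) * (\<Sum>v<Suc n. y v) + (\<Sum>u<Suc n. y u) * (\<Sum>v<Suc n. ?Z v v * y v)
      - 2 * (\<Sum>u<Suc n. \<Sum>v<Suc n. y u * ?Z u v * y v)"
    by (rule quad_split)
  also have "\<dots> = 2 * (\<Sum>u<Suc n. y u) * (\<Sum>u<Suc n. y u * ?Z u u) - 2 * qf n (\<lambda>i j. Z $$ (i,j)) y"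
    unfolding sum_Suc_Zt by (simp add: mult_ac)
  finally show ?thesis .
qed

lemma farris_CND: assumes Z: "Z \<in> pd_mats n" shows "farris (Suc n) Z \<in> CND_cone (Suc n)"
proof -
  let ?G = "farris (Suc n) Z"
  have Zc: "Z \<in> carrier_mat n n" using carrier_pd[OF Z] .
  have P: "PDf n (\<lambda>i j. Z $$ (i,j))" using pd_PDf[OF Z] .
  then have sym: "\<forall>i<n. \<forall>j<n. Z $$ (i,j) = Z $$ (j,i)" unfolding PDf_def by auto
  have "transpose_mat ?G = ?G"
    by (rule eq_matI) (auto simp: farris_carrier[THEN carrier_matD(1)] farris_carrier[THEN carrier_matD(2)]
        farris_idx Zt_sym[OF sym])
  then have "?G \<in> sym_mats (Suc n)" unfolding sym_mats_def using farris_carrier by auto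
  moreover have "\<forall>i<Suc n. ?G $$ (i,i) = 0" unfolding farris_def by simp
  moreover have "x \<bullet> (?G *\<^sub>v x) < 0" if x: "x \<in> carrier_vec (Suc n)" "x \<noteq> 0\<^sub>v (Suc n)"
    "(\<Sum>i<Suc n. x $ i) = 0" for x
  proof -
    have "\<exists>i<n. x $ i \<noteq> 0"
    proof (rule ccontr)
      assume "\<not> ?thesis"
      then have a: "\<forall>i<n. x $ i = 0" by auto
      then have "(\<Sum>i<Suc n. x $ i) = x $ n" by simp
      then have "x $ n = 0" using x(3) by simp
      then have "x = 0\<^sub>v (Suc n)" using a x(1) by (intro eq_vecI) (auto simp: less_Suc_eq)
      then show False using x(2) by simp
    qed
    then have "qf n (\<lambda>i j. Z $$ (i,j)) (\<lambda>i. x $ i) > 0" using P unfolding PDf_def by auto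
    moreover have "x \<bullet> (?G *\<^sub>v x) = (\<Sum>u<Suc n. \<Sum>v<Suc n. x $ u * ?G $$ (u,v) * x $ v)"
      using qf_vec[OF farris_carrier x(1)] unfolding qf_def .
    from this farris_quad[of "\<lambda>i. x $ i" n Z]
    have "x \<bullet> (?G *\<^sub>v x) = 2 * (\<Sum>u<Suc n. x $ u) * (\<Sum>u<Suc n. x $ u * Zt n Z u u)
        - 2 * qf n (\<lambda>i j. Z $$ (i,j)) (\<lambda>i. x $ i)" by (rule trans)
    moreover from this have "x \<bullet> (?G *\<^sub>v x) = - 2 * qf n (\<lambda>i j. Z $$ (i,j)) (\<lambda>i. x $ i)"
      unfolding x(3) by simp
    ultimately show ?thesis by simp
  qed
  ultimately show ?thesis unfolding CND_cone_def by auto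
qed

lemma CND_farris: assumes G: "G \<in> CND_cone (Suc n)"
  shows "\<exists>Z\<in>pd_mats n. farris (Suc n) Z = G"
proof -
  have Gc: "G \<in> carrier_mat (Suc n) (Suc n)" and Gt: "transpose_mat G = G"
    and Gd: "\<forall>i<Suc n. G $$ (i,i) = 0"
    and Gneg: "\<And>x. x \<in> carrier_vec (Suc n) \<Longrightarrow> x \<noteq> 0\<^sub>v (Suc n) \<Longrightarrow> (\<Sum>i<Suc n. x $ i) = 0
      \<Longrightarrow> x \<bullet> (G *\<^sub>v x) < 0"
    using G unfolding CND_cone_def sym_mats_def by auto
  have Gs: "G $$ (i,j) = G $$ (j,i)" if "i < Suc n" "j < Suc n" for i j
  proof -
    have "transpose_mat G $$ (i,j) = G $$ (j,i)" using Gc that by simp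
    then show ?thesis using Gt by simp
  qed
  define Z where "Z = mat n n (\<lambda>(u,v). (G $$ (u,n) + G $$ (v,n) - G $$ (u,v)) / 2)"
  have Zc: "Z \<in> carrier_mat n n" unfolding Z_def by simp
  have Zs: "\<forall>i<n. \<forall>j<n. Z $$ (i,j) = Z $$ (j,i)" unfolding Z_def using Gs by auto
  have Zd: "Zt n Z u u = G $$ (u,n)" if "u < n" for u
    unfolding Zt_def Z_def using that Gd by auto
  have FZ: "farris (Suc n) Z = G"
  proof (rule eq_matI)
    fix u v assume uv: "u < dim_row G" "v < dim_col G"
    then have uv': "u < Suc n" "v < Suc n" using Gc by auto
    show "farris (Suc n) Z $$ (u,v) = G $$ (u,v)"
      unfolding farris_idx[OF uv']
    proof (cases "u < n"; cases "v < n")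
      assume "u < n" "v < n"
      then show "Zt n Z u u + Zt n Z v v - 2 * Zt n Z u v = G $$ (u,v)"
        using Zd unfolding Zt_def Z_def by (simp add: field_simps)
    next
      assume "u < n" "\<not> v < n"
      then have "v = n" using uv' by simp
      then show "Zt n Z u u + Zt n Z v v - 2 * Zt n Z u v = G $$ (u,v)"
        using Zd[OF \<open>u < n\<close>] unfolding Zt_def by simp
    next
      assume "\<not> u < n" "v < n"
      then have "u = n" using uv' by simp
      then show "Zt n Z u u + Zt n Z v v - 2 * Zt n Z u v = G $$ (u,v)"
        using Zd[OF \<open>v < n\<close>] Gs[of n v] \<open>v < n\<close> unfolding Zt_def by simp
    next
      assume "\<not> u < n" "\<not> v < n"
      then have "u = n" "v = n" using uv' by auto
      then show "Zt n Z u u + Zt n Z v v - 2 * Zt n Z u v = G $$ (u,v)"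
        using Gd unfolding Zt_def by simp
    qed
  qed (use Gc farris_carrier[of "Suc n" Z] in auto)
  have "PDf n (\<lambda>i j. Z $$ (i,j))" unfolding PDf_def
  proof (intro conjI allI impI)
    fix i j assume "i < n" "j < n" then show "Z $$ (i,j) = Z $$ (j,i)" using Zs by auto
  next
    fix y :: "nat \<Rightarrow> real" assume y: "\<exists>i<n. y i \<noteq> 0"
    then obtain i where i: "i < n" "y i \<noteq> 0" by auto
    define x where "x = vec (Suc n) (\<lambda>i. if i < n then y i else - (\<Sum>j<n. y j))"
    have xc: "x \<in> carrier_vec (Suc n)" unfolding x_def by simp
    have "x $ i \<noteq> 0" using i unfolding x_def by simp
    then have xz: "x \<noteq> 0\<^sub>v (Suc n)" using i by auto
    have xs: "(\<Sum>i<Suc n. x $ i) = 0" unfolding x_def by simp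
    have "x \<bullet> (G *\<^sub>v x) < 0" using Gneg[OF xc xz xs] .
    moreover have "x \<bullet> (G *\<^sub>v x) = (\<Sum>u<Suc n. \<Sum>v<Suc n. x $ u * farris (Suc n) Z $$ (u,v) * x $ v)"
      using qf_vec[OF Gc xc] unfolding qf_def FZ .
    from this farris_quad[of "\<lambda>i. x $ i" n Z]
    have "x \<bullet> (G *\<^sub>v x) = 2 * (\<Sum>u<Suc n. x $ u) * (\<Sum>u<Suc n. x $ u * Zt n Z u u)
        - 2 * qf n (\<lambda>i j. Z $$ (i,j)) (\<lambda>i. x $ i)" by (rule trans)
    moreover from this have "x \<bullet> (G *\<^sub>v x) = - 2 * qf n (\<lambda>i j. Z $$ (i,j)) (\<lambda>i. x $ i)"
      unfolding xs by simp
    moreover have "qf n (\<lambda>i j. Z $$ (i,j)) (\<lambda>i. x $ i) = qf n (\<lambda>i j. Z $$ (i,j)) y"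
      unfolding qf_def x_def by (intro sum.cong refl) auto
    ultimately show "qf n (\<lambda>i j. Z $$ (i,j)) y > 0" by linarith
  qed
  then have "Z \<in> pd_mats n" using PDf_pd[OF Zc] by simp
  then show ?thesis using FZ by auto
qed

lemma prod_list_ones: "(\<forall>i<N. f i = (1::real)) \<Longrightarrow> prod_list (map f [0..<N]) = 1"
  by (induct N) auto

lemma neg1_sq: "(-1::real)^n * (-1)^n = 1"
  by (induct n) auto

lemma det_bordered: assumes Z: "Z \<in> carrier_mat n n"
  shows "det (bordered (Suc n) (farris (Suc n) Z)) = det Z"
proof -
  define N where "N = Suc (Suc n)"
  define h where "h = (\<lambda>i. if i = 0 then 0 else Zt n Z (i - 1) (i - 1) / 2)"
  define L where "L = mat N N (\<lambda>(i,j). (if i = j then 1 else 0) + (if j = 0 \<and> i \<noteq> 0 then h i else 0))"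
  define R where "R = mat N N (\<lambda>(i,j). (if i = j then 1 else 0) - (if i = 0 \<and> j \<noteq> 0 then h j else 0))"
  define K where "K = mat N N (\<lambda>(i,j). if i = 0 \<and> j = 0 then 0 else if i = 0 then -1
      else if j = 0 then 1 else Zt n Z (i - 1) (j - 1))"
  have Lc: "L \<in> carrier_mat N N" and Rc: "R \<in> carrier_mat N N" and Kc: "K \<in> carrier_mat N N"
    unfolding L_def R_def K_def by auto
  define P where "P = L * K"
  have LKc: "P \<in> carrier_mat N N" using Lc Kc unfolding P_def by auto
  have LK: "P $$ (i,j) = K $$ (i,j) + (if i \<noteq> 0 then h i * K $$ (0,j) else 0)"
    if ij: "i < N" "j < N" for i j
  proof -
    have "P $$ (i,j) = (\<Sum>a\<in>{0..<N}. L $$ (i,a) * K $$ (a,j))"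
      using ij Lc Kc unfolding P_def by (auto simp: scalar_prod_def intro!: sum.cong)
    also have "\<dots> = (\<Sum>a\<in>{0..<N}. (if a = i then K $$ (a,j) else 0)
        + (if a = 0 then (if i \<noteq> 0 then h i * K $$ (0,j) else 0) else 0))"
      using ij by (intro sum.cong refl) (auto simp: L_def)
    also have "\<dots> = K $$ (i,j) + (if i \<noteq> 0 then h i * K $$ (0,j) else 0)"
      using ij by (simp add: sum.distrib)
    finally show ?thesis .
  qed
  have LKR: "(P * R) $$ (i,j) = P $$ (i,j) - (if j \<noteq> 0 then P $$ (i,0) * h j else 0)"
    if ij: "i < N" "j < N" for i j
  proof -
    have "(P * R) $$ (i,j) = (\<Sum>b\<in>{0..<N}. P $$ (i,b) * R $$ (b,j))"
      using ij LKc Rc by (auto simp: scalar_prod_def intro!: sum.cong)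
    also have "\<dots> = (\<Sum>b\<in>{0..<N}. (if b = j then P $$ (i,b) else 0)
        - (if b = 0 then (if j \<noteq> 0 then P $$ (i,0) * h j else 0) else 0))"
      using ij by (intro sum.cong refl) (auto simp: R_def)
    also have "\<dots> = P $$ (i,j) - (if j \<noteq> 0 then P $$ (i,0) * h j else 0)"
      using ij by (simp add: sum_subtractf)
    finally show ?thesis .
  qed
  have B: "bordered (Suc n) (farris (Suc n) Z) = P * R"
  proof (rule eq_matI)
    fix i j assume "i < dim_row (P * R)" "j < dim_col (P * R)"
    then have ij: "i < N" "j < N" using LKc Rc by auto
    have K0j: "K $$ (0,j) = (if j = 0 then 0 else -1)" using ij by (simp add: K_def)
    have LKi0: "P $$ (i,0) = (if i = 0 then 0 else 1)"
      using LK[of i 0] ij by (simp add: K_def N_def)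
    show "bordered (Suc n) (farris (Suc n) Z) $$ (i,j) = (P * R) $$ (i,j)"
      unfolding LKR[OF ij] LK[OF ij] LKi0 K0j
    proof (cases "i = 0"; cases "j = 0")
      assume "i \<noteq> 0" "j \<noteq> 0"
      then have "i - 1 < Suc n" "j - 1 < Suc n" using ij by (auto simp: N_def)
      then show "bordered (Suc n) (farris (Suc n) Z) $$ (i, j) =
        K $$ (i, j) + (if i \<noteq> 0 then h i * (if j = 0 then 0 else - 1) else 0) -
        (if j \<noteq> 0 then (if i = 0 then 0 else 1) * h j else 0)"
        using ij \<open>i \<noteq> 0\<close> \<open>j \<noteq> 0\<close>
        by (simp add: bordered_def K_def h_def farris_idx N_def field_simps)
    qed (use ij in \<open>auto simp: bordered_def K_def N_def\<close>)
  qed (use LKc Rc in \<open>auto simp: bordered_def N_def\<close>)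
  have dL: "det L = 1"
  proof -
    have "det L = prod_list (diag_mat L)"
      by (rule det_lower_triangular[OF _ Lc]) (auto simp: L_def)
    also have "\<dots> = 1" unfolding diag_mat_def using Lc
      by (intro prod_list_ones) (auto simp: L_def)
    finally show ?thesis .
  qed
  have dR: "det R = 1"
  proof -
    have "upper_triangular R" unfolding upper_triangular_def using Rc by (auto simp: R_def)
    then have "det R = prod_list (diag_mat R)" by (rule det_upper_triangular[OF _ Rc])
    also have "\<dots> = 1" unfolding diag_mat_def using Rc
      by (intro prod_list_ones) (auto simp: R_def)
    finally show ?thesis .
  qed
  define D1 where "D1 = mat_delete K (Suc n) 0"
  have D1c: "D1 \<in> carrier_mat (Suc n) (Suc n)"
    using mat_delete_carrier[OF Kc] by (simp add: D1_def N_def)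
  have D1e: "D1 $$ (i,j) = K $$ (i, Suc j)" if "i < Suc n" "j < Suc n" for i j
    using that Kc by (simp add: D1_def mat_delete_def N_def)
  have "det K = (\<Sum>j<N. K $$ (Suc n, j) * cofactor K (Suc n) j)"
    by (rule laplace_expansion_row[OF Kc]) (simp add: N_def)
  also have "\<dots> = (\<Sum>j<N. if j = 0 then cofactor K (Suc n) 0 else 0)"
    by (intro sum.cong refl) (auto simp: K_def Zt_def N_def)
  also have "\<dots> = (-1)^(Suc n) * det D1" by (simp add: N_def cofactor_def D1_def)
  finally have dK1: "det K = (-1)^(Suc n) * det D1" .
  have "det D1 = (\<Sum>i<Suc n. D1 $$ (i,n) * cofactor D1 i n)"
    by (rule laplace_expansion_column[OF D1c]) simp
  also have "\<dots> = (\<Sum>i<Suc n. if i = 0 then - cofactor D1 0 n else 0)"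
    by (intro sum.cong refl) (auto simp: D1e K_def Zt_def N_def)
  also have "\<dots> = - ((-1)^n * det (mat_delete D1 0 n))" by (simp add: cofactor_def)
  finally have dD1: "det D1 = - ((-1)^n * det (mat_delete D1 0 n))" .
  have D2: "mat_delete D1 0 n = Z"
    by (rule eq_matI) (use D1c Z in \<open>auto simp: mat_delete_def D1e K_def Zt_def N_def\<close>)
  have dK: "det K = det Z"
    unfolding dK1 dD1 D2 using neg1_sq[of n] by (simp add: algebra_simps)
  have "det (P * R) = det P * det R" by (rule det_mult[OF LKc Rc])
  also have "det P = det L * det K" unfolding P_def by (rule det_mult[OF Lc Kc])
  finally show ?thesis unfolding B dL dR dK by simp
qed

definition Eab :: "nat \<Rightarrow> nat \<Rightarrow> nat \<Rightarrow> nat \<Rightarrow> real" where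
  "Eab a b i j = (if i = a \<and> j = a then 1 else 0) + (if i = b \<and> j = b then 1 else 0)
     - (if i = a \<and> j = b then 1 else 0) - (if i = b \<and> j = a then 1 else 0)"

lemma finite_pairs: "finite (pairs m)"
  by (rule finite_subset[of _ "{..<m} \<times> {..<m}"]) (auto simp: pairs_def)

lemma pairs_Sigma: "pairs m = Sigma {..<m} (\<lambda>a. {a<..<m})"
  unfolding pairs_def by auto

lemma sum_pairs: "(\<Sum>p\<in>pairs m. f p) = (\<Sum>a<m. \<Sum>b\<in>{a<..<m}. f (a,b))"
  unfolding pairs_Sigma by (subst sum.Sigma) auto

lemma sum_pairs_delta:
  "(\<Sum>(a,b)\<in>pairs m. if a = u \<and> b = v then g a b else 0) = (if u < v \<and> v < m then g u v else (0::real))"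
proof -
  have "(\<Sum>(a,b)\<in>pairs m. if a = u \<and> b = v then g a b else 0) = (\<Sum>p\<in>pairs m. if p = (u,v) then g u v else 0)"
    by (intro sum.cong refl) (auto split: if_splits)
  also have "\<dots> = (if (u,v) \<in> pairs m then g u v else 0)" using finite_pairs by (simp add: sum.delta)
  finally show ?thesis by (simp add: pairs_def)
qed

lemma bt_lambda_sym: "bt_lambda \<pi> a b = bt_lambda \<pi> b a"
  unfolding bt_lambda_def by (simp add: mult.commute add.commute)

lemma info_entry: assumes ij: "i < m" "j < m"
  shows "info_mat m \<pi> w $$ (i,j) = (\<Sum>(a,b)\<in>pairs m. w a b * bt_lambda \<pi> a b * Eab a b i j)"
proof (cases "i = j")
  case False
  have "(\<Sum>(a,b)\<in>pairs m. w a b * bt_lambda \<pi> a b * Eab a b i j) =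
     (\<Sum>p\<in>pairs m. (case p of (a,b) \<Rightarrow> if a = i \<and> b = j then - (w a b * bt_lambda \<pi> a b) else 0)
       + (case p of (a,b) \<Rightarrow> if a = j \<and> b = i then - (w a b * bt_lambda \<pi> a b) else 0))"
    using False by (intro sum.cong refl) (auto simp: Eab_def pairs_def)
  also have "\<dots> = (if i < j then - (w i j * bt_lambda \<pi> i j) else 0)
      + (if j < i then - (w j i * bt_lambda \<pi> j i) else 0)"
    unfolding sum.distrib sum_pairs_delta using ij by simp
  also have "\<dots> = info_mat m \<pi> w $$ (i,j)"
    using ij False by (auto simp: info_mat_def symw_def bt_lambda_sym)
  finally show ?thesis by simp
next
  case True
  define f where "f = (\<lambda>a b. w a b * bt_lambda \<pi> a b)"
  have "(\<Sum>(a,b)\<in>pairs m. w a b * bt_lambda \<pi> a b * Eab a b i j) =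
     (\<Sum>p\<in>pairs m. (case p of (a,b) \<Rightarrow> if a = i then f a b else 0)
       + (case p of (a,b) \<Rightarrow> if b = i then f a b else 0))"
    using True by (intro sum.cong refl) (auto simp: Eab_def pairs_def f_def)
  also have "\<dots> = (\<Sum>p\<in>pairs m. (case p of (a,b) \<Rightarrow> if a = i then f a b else 0))
      + (\<Sum>p\<in>pairs m. (case p of (a,b) \<Rightarrow> if b = i then f a b else 0))"
    by (rule sum.distrib)
  also have "(\<Sum>p\<in>pairs m. (case p of (a,b) \<Rightarrow> if a = i then f a b else 0)) = (\<Sum>b\<in>{i<..<m}. f i b)"
  proof -
    have "(\<Sum>p\<in>pairs m. (case p of (a,b) \<Rightarrow> if a = i then f a b else 0))
        = (\<Sum>a<m. \<Sum>b\<in>{a<..<m}. if a = i then f a b else 0)" by (simp add: sum_pairs)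
    also have "\<dots> = (\<Sum>a<m. if a = i then (\<Sum>b\<in>{a<..<m}. f a b) else 0)"
      by (intro sum.cong refl) auto
    also have "\<dots> = (\<Sum>b\<in>{i<..<m}. f i b)" using ij by simp
    finally show ?thesis .
  qed
  also have "(\<Sum>p\<in>pairs m. (case p of (a,b) \<Rightarrow> if b = i then f a b else 0)) = (\<Sum>a<i. f a i)"
  proof -
    have "(\<Sum>p\<in>pairs m. (case p of (a,b) \<Rightarrow> if b = i then f a b else 0))
        = (\<Sum>a<m. \<Sum>b\<in>{a<..<m}. if b = i then f a b else 0)" by (simp add: sum_pairs)
    also have "\<dots> = (\<Sum>a<m. if a < i then f a i else 0)"
      using ij by (intro sum.cong refl) auto
    also have "\<dots> = (\<Sum>a\<in>{a\<in>{..<m}. a < i}. f a i)" by (rule sum.inter_filter[symmetric]) simp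
    also have "{a\<in>{..<m}. a < i} = {..<i}" using ij by auto
    finally show ?thesis .
  qed
  also have "(\<Sum>b\<in>{i<..<m}. f i b) + (\<Sum>a<i. f a i) = info_mat m \<pi> w $$ (i,j)"
  proof -
    have "info_mat m \<pi> w $$ (i,j) = (\<Sum>k\<in>{..<m} - {i}. bt_lambda \<pi> i k * symw w i k)"
      using ij True by (simp add: info_mat_def)
    also have "{..<m} - {i} = {..<i} \<union> {i<..<m}" using ij by auto
    also have "(\<Sum>k\<in>{..<i} \<union> {i<..<m}. bt_lambda \<pi> i k * symw w i k)
        = (\<Sum>k<i. bt_lambda \<pi> i k * symw w i k) + (\<Sum>k\<in>{i<..<m}. bt_lambda \<pi> i k * symw w i k)"
      by (rule sum.union_disjoint) auto
    also have "(\<Sum>k<i. bt_lambda \<pi> i k * symw w i k) = (\<Sum>a<i. f a i)"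
      by (intro sum.cong refl) (auto simp: f_def symw_def bt_lambda_sym)
    also have "(\<Sum>k\<in>{i<..<m}. bt_lambda \<pi> i k * symw w i k) = (\<Sum>b\<in>{i<..<m}. f i b)"
      by (intro sum.cong refl) (auto simp: f_def symw_def)
    finally show ?thesis by simp
  qed
  finally show ?thesis by simp
qed

lemma red_info_carrier: "red_info_mat m \<pi> w \<in> carrier_mat (m - 1) (m - 1)"
  unfolding red_info_mat_def by simp

lemma dsum_delta2: fixes Z :: "real mat"
  shows "(\<Sum>i<n. \<Sum>j<n. Z $$ (i,j) * (if j = u \<and> i = v then 1 else 0)) = Zt n Z v u"
proof -
  have e: "(\<Sum>j<n. Z $$ (i,j) * (if j = u \<and> i = v then 1 else 0)) =
     (\<Sum>j<n. if j = u then (if i = v then Z $$ (v,u) else 0) else 0)" for i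
    by (intro sum.cong refl) auto
  have "(\<Sum>i<n. \<Sum>j<n. Z $$ (i,j) * (if j = u \<and> i = v then 1 else 0))
      = (\<Sum>i<n. if i = v then (\<Sum>j<n. if j = u then Z $$ (v,u) else 0) else 0)"
    unfolding e by (intro sum.cong refl) auto
  also have "\<dots> = Zt n Z v u" by (simp add: Zt_def)
  finally show ?thesis .
qed

lemma trace_Eab: fixes Z :: "real mat"
  assumes sym: "\<forall>i<n. \<forall>j<n. Z $$ (i,j) = Z $$ (j,i)" and ab: "a < b" "b < Suc n"
  shows "(\<Sum>i<n. \<Sum>j<n. Z $$ (i,j) * Eab a b j i) = farris (Suc n) Z $$ (a,b)"
proof -
  have "(\<Sum>i<n. \<Sum>j<n. Z $$ (i,j) * Eab a b j i) =
     (\<Sum>i<n. \<Sum>j<n. Z $$ (i,j) * (if j = a \<and> i = a then 1 else 0)) +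
     (\<Sum>i<n. \<Sum>j<n. Z $$ (i,j) * (if j = b \<and> i = b then 1 else 0)) -
     (\<Sum>i<n. \<Sum>j<n. Z $$ (i,j) * (if j = a \<and> i = b then 1 else 0)) -
     (\<Sum>i<n. \<Sum>j<n. Z $$ (i,j) * (if j = b \<and> i = a then 1 else 0))"
    unfolding Eab_def by (simp add: algebra_simps sum.distrib sum_subtractf)
  also have "\<dots> = Zt n Z a a + Zt n Z b b - Zt n Z b a - Zt n Z a b"
    unfolding dsum_delta2 ..
  also have "\<dots> = farris (Suc n) Z $$ (a,b)"
    using ab by (simp add: farris_idx Zt_sym[OF sym, of b a])
  finally show ?thesis .
qed

lemma trace_info: assumes Z: "Z \<in> carrier_mat n n"
  and sym: "\<forall>i<n. \<forall>j<n. Z $$ (i,j) = Z $$ (j,i)"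
  shows "mtrace (Z * red_info_mat (Suc n) \<pi> w) =
    (\<Sum>(a,b)\<in>pairs (Suc n). w a b * bt_lambda \<pi> a b * farris (Suc n) Z $$ (a,b))"
proof -
  let ?M = "red_info_mat (Suc n) \<pi> w"
  have Mc: "?M \<in> carrier_mat n n" using red_info_carrier[of "Suc n" \<pi> w] by simp
  define g where "g = (\<lambda>p i j. case p of (a,b) \<Rightarrow> w a b * bt_lambda \<pi> a b * Eab a b j i)"
  have "mtrace (Z * ?M) = (\<Sum>i<n. \<Sum>j<n. Z $$ (i,j) * ?M $$ (j,i))"
    by (rule mtrace_mult[OF Z Mc])
  also have "\<dots> = (\<Sum>i<n. \<Sum>j<n. Z $$ (i,j) * (\<Sum>p\<in>pairs (Suc n). g p i j))"
    by (intro sum.cong refl) (auto simp: red_info_mat_def info_entry g_def split_def)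
  also have "\<dots> = (\<Sum>i<n. \<Sum>j<n. \<Sum>p\<in>pairs (Suc n). Z $$ (i,j) * g p i j)"
    by (simp add: sum_distrib_left)
  also have "\<dots> = (\<Sum>i<n. \<Sum>p\<in>pairs (Suc n). \<Sum>j<n. Z $$ (i,j) * g p i j)"
    by (intro sum.cong refl sum.swap)
  also have "\<dots> = (\<Sum>p\<in>pairs (Suc n). \<Sum>i<n. \<Sum>j<n. Z $$ (i,j) * g p i j)"
    by (rule sum.swap)
  also have "\<dots> = (\<Sum>(a,b)\<in>pairs (Suc n). w a b * bt_lambda \<pi> a b * farris (Suc n) Z $$ (a,b))"
  proof (intro sum.cong refl)
    fix p assume p: "p \<in> pairs (Suc n)"
    obtain a b where pab: "p = (a,b)" by (cases p)
    have ab: "a < b" "b < Suc n" using p pab by (auto simp: pairs_def)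
    have "(\<Sum>i<n. \<Sum>j<n. Z $$ (i,j) * g p i j) =
        w a b * bt_lambda \<pi> a b * (\<Sum>i<n. \<Sum>j<n. Z $$ (i,j) * Eab a b j i)"
      unfolding pab g_def by (simp add: sum_distrib_left mult_ac)
    also have "\<dots> = w a b * bt_lambda \<pi> a b * farris (Suc n) Z $$ (a,b)"
      unfolding trace_Eab[OF sym ab] ..
    finally show "(\<Sum>i<n. \<Sum>j<n. Z $$ (i,j) * g p i j) =
        (case p of (a,b) \<Rightarrow> w a b * bt_lambda \<pi> a b * farris (Suc n) Z $$ (a,b))"
      unfolding pab by simp
  qed
  finally show ?thesis .
qed

lemma lam_pos: assumes "a < m" "b < m" "\<And>i. i < m \<Longrightarrow> \<pi> i > 0"
  shows "bt_lambda \<pi> a b > 0"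
  using assms(3)[OF assms(1)] assms(3)[OF assms(2)] unfolding bt_lambda_def by simp

lemma sym_of_sym_mats: assumes "Z \<in> sym_mats n"
  shows "Z \<in> carrier_mat n n" "\<forall>i<n. \<forall>j<n. Z $$ (i,j) = Z $$ (j,i)"
proof -
  show Zc: "Z \<in> carrier_mat n n" using assms unfolding sym_mats_def by auto
  have Zt: "transpose_mat Z = Z" using assms unfolding sym_mats_def by auto
  show "\<forall>i<n. \<forall>j<n. Z $$ (i,j) = Z $$ (j,i)"
  proof (intro allI impI)
    fix i j assume "i < n" "j < n"
    then have "transpose_mat Z $$ (i,j) = Z $$ (j,i)" using Zc by simp
    then show "Z $$ (i,j) = Z $$ (j,i)" using Zt by simp
  qed
qed

lemma lagr_formula: assumes m: "m = Suc n" and Z: "Z \<in> carrier_mat n n"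
  and sym: "\<forall>i<n. \<forall>j<n. Z $$ (i,j) = Z $$ (j,i)" and X: "X \<in> carrier_mat n n"
  shows "lagrangian m \<pi> w X Z \<nu> \<mu> = - ln (det X) + mtrace (Z * X) - \<nu>
     + (\<Sum>(a,b)\<in>pairs m. w a b * (\<nu> - \<mu> a b - bt_lambda \<pi> a b * farris m Z $$ (a,b)))"
proof -
  let ?M = "red_info_mat m \<pi> w"
  have Mc: "?M \<in> carrier_mat n n" using red_info_carrier[of m \<pi> w] m by simp
  have XM: "X - ?M \<in> carrier_mat n n" using minus_carrier_mat[OF Mc] X by simp
  have "mtrace (Z * (X - ?M)) = (\<Sum>i<n. \<Sum>j<n. Z $$ (i,j) * (X - ?M) $$ (j,i))"
    by (rule mtrace_mult[OF Z XM])
  also have "\<dots> = (\<Sum>i<n. \<Sum>j<n. Z $$ (i,j) * X $$ (j,i) - Z $$ (i,j) * ?M $$ (j,i))"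
    using X Mc by (intro sum.cong refl) (auto simp: right_diff_distrib)
  also have "\<dots> = mtrace (Z * X) - mtrace (Z * ?M)"
    unfolding mtrace_mult[OF Z X] mtrace_mult[OF Z Mc] by (simp add: sum_subtractf)
  finally have tr: "mtrace (Z * (X - ?M)) = mtrace (Z * X) - mtrace (Z * ?M)" .
  have S: "(\<Sum>(a,b)\<in>pairs m. w a b * (\<nu> - \<mu> a b - bt_lambda \<pi> a b * farris m Z $$ (a,b))) =
     \<nu> * (\<Sum>(a,b)\<in>pairs m. w a b) - (\<Sum>(a,b)\<in>pairs m. \<mu> a b * w a b)
     - (\<Sum>(a,b)\<in>pairs m. w a b * bt_lambda \<pi> a b * farris m Z $$ (a,b))"
    by (simp add: split_def sum_subtractf sum_distrib_left sum.distrib algebra_simps)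
  show ?thesis
    unfolding lagrangian_def tr S using trace_info[OF Z sym, of \<pi> w] m
    by (simp add: algebra_simps)
qed

lemma one_pd: "1\<^sub>m n \<in> pd_mats n"
proof (rule gram_pd[where R = "\<lambda>i j. if i = j then 1 else 0"])
  show "\<forall>i<n. \<forall>j<n. 1\<^sub>m n $$ (i,j) = (\<Sum>k<n. (if k = i then 1 else 0) * (if k = j then 1 else (0::real)))"
  proof (intro allI impI)
    fix i j assume ij: "i < n" "j < n"
    have "(\<Sum>k<n. (if k = i then 1 else 0) * (if k = j then 1 else (0::real))) =
        (\<Sum>k<n. if k = i then (if i = j then 1 else 0) else 0)"
      by (intro sum.cong refl) auto
    then show "1\<^sub>m n $$ (i,j) = (\<Sum>k<n. (if k = i then 1 else 0) * (if k = j then 1 else (0::real)))"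
      using ij by simp
  qed
qed auto

lemma dual_le: assumes "X \<in> pd_mats (m - 1)"
  shows "dual_function m \<pi> Z \<nu> \<mu> \<le> ereal (lagrangian m \<pi> w X Z \<nu> \<mu>)"
  unfolding dual_function_def using assms by (intro INF_lower2[of "(w,X)"]) auto


lemma caseA: assumes m: "m = Suc n" and Zs: "Z \<in> sym_mats n"
  and mu0: "\<forall>(u,v)\<in>pairs m. 0 \<le> \<mu> u v"
  and uv: "(u,v) \<in> pairs m" "\<nu> < bt_lambda \<pi> u v * farris m Z $$ (u,v)"
  shows "dual_function m \<pi> Z \<nu> \<mu> = -\<infinity>"
proof -
  note Zc = sym_of_sym_mats(1)[OF Zs] and Zsym = sym_of_sym_mats(2)[OF Zs]
  define c where "c = \<nu> - \<mu> u v - bt_lambda \<pi> u v * farris m Z $$ (u,v)"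
  have "\<mu> u v \<ge> 0" using mu0 uv(1) by auto
  then have c: "c < 0" using uv(2) unfolding c_def by simp
  define K0 where "K0 = - ln (det (1\<^sub>m n)) + mtrace (Z * 1\<^sub>m n) - \<nu>"
  show ?thesis
  proof (rule ereal_bot)
    fix B
    define s where "s = (B - K0) / c"
    define w where "w = (\<lambda>a b. if a = u \<and> b = v then s else (0::real))"
    have "(\<Sum>(a,b)\<in>pairs m. w a b * (\<nu> - \<mu> a b - bt_lambda \<pi> a b * farris m Z $$ (a,b)))
        = (\<Sum>(a,b)\<in>pairs m. if a = u \<and> b = v then s * c else 0)"
      unfolding w_def c_def by (intro sum.cong refl) auto
    also have "\<dots> = s * c" unfolding sum_pairs_delta using uv(1) by (simp add: pairs_def)
    finally have e: "(\<Sum>(a,b)\<in>pairs m. w a b * (\<nu> - \<mu> a b - bt_lambda \<pi> a b * farris m Z $$ (a,b))) = s * c" .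
    have "lagrangian m \<pi> w (1\<^sub>m n) Z \<nu> \<mu> = K0 + s * c"
      unfolding lagr_formula[OF m Zc Zsym one_carrier_mat] e K0_def by simp
    also have "\<dots> = B" using c unfolding s_def by simp
    finally have L: "lagrangian m \<pi> w (1\<^sub>m n) Z \<nu> \<mu> = B" .
    have "dual_function m \<pi> Z \<nu> \<mu> \<le> ereal (lagrangian m \<pi> w (1\<^sub>m n) Z \<nu> \<mu>)"
      using dual_le[of "1\<^sub>m n" m \<pi> Z \<nu> \<mu> w] one_pd[of n] m by simp
    then show "dual_function m \<pi> Z \<nu> \<mu> \<le> ereal B" unfolding L .
  qed
qed

lemma caseB1: assumes m: "m = Suc n" and Zs: "Z \<in> sym_mats n" and nZ: "Z \<notin> pd_mats n"
  shows "dual_function m \<pi> Z \<nu> \<mu> = -\<infinity>"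
proof -
  note Zc = sym_of_sym_mats(1)[OF Zs] and Zsym = sym_of_sym_mats(2)[OF Zs]
  obtain x where x: "x \<in> carrier_vec n" "x \<noteq> 0\<^sub>v n" "\<not> x \<bullet> (Z *\<^sub>v x) > 0"
    using Zs nZ unfolding pd_mats_def by auto
  define y where "y = (\<lambda>i. x $ i)"
  have ex: "\<exists>i. i < n \<and> y i \<noteq> 0"
  proof (rule ccontr)
    assume "\<not> ?thesis" then have "x = 0\<^sub>v n" using x(1) unfolding y_def by (intro eq_vecI) auto
    then show False using x(2) by simp
  qed
  define k where "k = (LEAST i. i < n \<and> y i \<noteq> 0)"
  have k: "k < n" "y k \<noteq> 0" using LeastI_ex[OF ex] unfolding k_def by auto
  have kmin: "y j = 0" if "j < k" for j
  proof (rule ccontr)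
    assume "y j \<noteq> 0" then have "k \<le> j" unfolding k_def using that k(1) by (intro Least_le) simp
    then show False using that by simp
  qed
  have q: "qf n (\<lambda>i j. Z $$ (i,j)) y \<le> 0" using x(3) qf_vec[OF Zc x(1)] unfolding y_def by simp
  define c0 where "c0 = (\<Sum>i<n. if i = k then 0 else Z $$ (i,i))"
  show ?thesis
  proof (rule ereal_bot)
    fix B
    define t where "t = exp (- ln ((y k)^2) + c0 - \<nu> - B)"
    have t: "t > 0" unfolding t_def by simp
    have st: "sqrt t * a * (sqrt t * b) = t * a * b" for a b
    proof -
      have "sqrt t * a * (sqrt t * b) = (sqrt t * sqrt t) * a * b" by (simp add: mult_ac)
      also have "sqrt t * sqrt t = t" using t by (simp flip: power2_eq_square)
      finally show ?thesis .
    qed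
    define Rt where "Rt = (\<lambda>l j. if l = k then sqrt t * y j else (if l = j then 1 else (0::real)))"
    define X where "X = mat n n (\<lambda>(i,j). t * y i * y j + (if i = j \<and> i \<noteq> k then 1 else 0))"
    have Xc: "X \<in> carrier_mat n n" by (simp add: X_def)
    have XR: "\<forall>i<n. \<forall>j<n. X $$ (i,j) = (\<Sum>l<n. Rt l i * Rt l j)"
    proof (intro allI impI)
      fix i j assume ij: "i < n" "j < n"
      have "(\<Sum>l<n. Rt l i * Rt l j) = (\<Sum>l<n. (if l = k then t * y i * y j else 0)
          + (if l = i then (if i = j \<and> i \<noteq> k then 1 else 0) else 0))"
      proof (intro sum.cong refl)
        fix l assume "l \<in> {..<n}"
        show "Rt l i * Rt l j = (if l = k then t * y i * y j else 0)
          + (if l = i then (if i = j \<and> i \<noteq> k then 1 else 0) else 0)"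
          unfolding Rt_def using st by auto
      qed
      also have "\<dots> = t * y i * y j + (if i = j \<and> i \<noteq> k then 1 else 0)"
        using k(1) ij by (simp add: sum.distrib)
      finally show "X $$ (i,j) = (\<Sum>l<n. Rt l i * Rt l j)" using ij by (simp add: X_def)
    qed
    have up: "\<forall>i j. j < i \<longrightarrow> Rt i j = 0" using kmin unfolding Rt_def by auto
    have dg: "\<forall>i<n. Rt i i \<noteq> 0" using k t unfolding Rt_def by auto
    have Xpd: "X \<in> pd_mats n" by (rule gram_pd[OF Xc XR up dg])
    have "(\<Prod>i<n. Rt i i) = (\<Prod>i<n. if i = k then sqrt t * y k else 1)"
      by (intro prod.cong refl) (auto simp: Rt_def)
    also have "\<dots> = sqrt t * y k" using k(1) by simp
    finally have "det X = (sqrt t * y k)^2" using gram_RTR_det[OF Xc XR up] by simp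
    then have dX: "det X = t * (y k)^2" using t by (simp add: power_mult_distrib)
    have trX: "mtrace (Z * X) = t * qf n (\<lambda>i j. Z $$ (i,j)) y + c0"
    proof -
      have "mtrace (Z * X) = (\<Sum>i<n. \<Sum>j<n. Z $$ (i,j) * X $$ (j,i))" by (rule mtrace_mult[OF Zc Xc])
      also have "\<dots> = (\<Sum>i<n. \<Sum>j<n. t * (y i * Z $$ (i,j) * y j)
          + (if j = i then (if i = k then 0 else Z $$ (i,i)) else 0))"
        by (intro sum.cong refl) (auto simp: X_def algebra_simps)
      also have "\<dots> = t * qf n (\<lambda>i j. Z $$ (i,j)) y + c0"
        unfolding qf_def c0_def by (simp add: sum.distrib sum_distrib_left)
      finally show ?thesis .
    qed
    have lnX: "ln (det X) = ln t + ln ((y k)^2)" unfolding dX using t k(2) by (simp add: ln_mult)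
    have "lagrangian m \<pi> (\<lambda>a b. 0) X Z \<nu> \<mu> = - ln (det X) + mtrace (Z * X) - \<nu>"
      using lagr_formula[OF m Zc Zsym Xc, of \<pi> "\<lambda>a b. 0" \<nu> \<mu>] by simp
    also have "\<dots> = B + t * qf n (\<lambda>i j. Z $$ (i,j)) y" unfolding lnX trX t_def by simp
    also have "\<dots> \<le> B" using t q by (simp add: mult_nonneg_nonpos)
    finally have L: "lagrangian m \<pi> (\<lambda>a b. 0) X Z \<nu> \<mu> \<le> B" .
    have "dual_function m \<pi> Z \<nu> \<mu> \<le> ereal (lagrangian m \<pi> (\<lambda>a b. 0) X Z \<nu> \<mu>)"
      using dual_le[of X m \<pi> Z \<nu> \<mu> "\<lambda>a b. 0"] Xpd m by simp
    also have "\<dots> \<le> ereal B" using L by simp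
    finally show "dual_function m \<pi> Z \<nu> \<mu> \<le> ereal B" .
  qed
qed

lemma inverse_pd: assumes Z: "Z \<in> pd_mats n"
  shows "\<exists>Bi. Bi \<in> pd_mats n \<and> Z * Bi = 1\<^sub>m n \<and> det Bi = 1 / det Z"
proof -
  have Zc: "Z \<in> carrier_mat n n" by (rule carrier_pd[OF Z])
  have dZ: "det Z > 0" by (rule pd_det_pos[OF Z])
  have U: "Z \<in> Units (ring_mat TYPE(real) n ())"
    by (rule det_non_zero_imp_unit[OF Zc]) (use dZ in simp)
  obtain Bi where Bi: "mat_inverse Z = Some Bi"
  proof (cases "mat_inverse Z")
    case None then show ?thesis using mat_inverse(1)[OF Zc None, where b="()"] U by blast
  next
    case (Some B) then show ?thesis using that by blast
  qed
  have ZB: "Z * Bi = 1\<^sub>m n" "Bi * Z = 1\<^sub>m n" and Bc: "Bi \<in> carrier_mat n n"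
    using mat_inverse(2)[OF Zc Bi] by auto
  have Zt: "transpose_mat Z = Z" using Z unfolding pd_mats_def sym_mats_def by auto
  have BtZ: "transpose_mat Bi * Z = 1\<^sub>m n"
  proof -
    have "transpose_mat (Z * Bi) = transpose_mat Bi * transpose_mat Z" by (rule transpose_mult[OF Zc Bc])
    then show ?thesis using ZB(1) Zt by simp
  qed
  have BT: "transpose_mat Bi = Bi"
  proof -
    have "transpose_mat Bi = transpose_mat Bi * (Z * Bi)" using ZB(1) Bc by simp
    also have "\<dots> = (transpose_mat Bi * Z) * Bi"
      by (rule assoc_mult_mat[symmetric]) (use Bc Zc in auto)
    also have "\<dots> = Bi" using BtZ Bc by simp
    finally show ?thesis .
  qed
  have pos: "v \<bullet> (Bi *\<^sub>v v) > 0" if v: "v \<in> carrier_vec n" "v \<noteq> 0\<^sub>v n" for v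
  proof -
    define u where "u = Bi *\<^sub>v v"
    have uc: "u \<in> carrier_vec n" using Bc v(1) unfolding u_def by simp
    have "Z *\<^sub>v u = (Z * Bi) *\<^sub>v v" unfolding u_def using Zc Bc v(1) by simp
    then have Zu: "Z *\<^sub>v u = v" using ZB(1) v(1) by simp
    have Zu': "Z *\<^sub>v (Bi *\<^sub>v v) = v" using Zu unfolding u_def .
    have "u \<noteq> 0\<^sub>v n"
    proof
      assume "u = 0\<^sub>v n"
      then have "Z *\<^sub>v u = 0\<^sub>v n" using Zc by (auto intro!: eq_vecI simp: scalar_prod_def)
      then show False using Zu v(2) by simp
    qed
    then have "u \<bullet> (Z *\<^sub>v u) > 0" using Z uc unfolding pd_mats_def by auto
    moreover have "(Z *\<^sub>v u) \<bullet> u = v \<bullet> (Bi *\<^sub>v v)" unfolding u_def Zu' ..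
    moreover have "(Z *\<^sub>v u) \<bullet> u = u \<bullet> (Z *\<^sub>v u)"
      by (rule comm_scalar_prod[of _ n]) (use Zc uc in auto)
    ultimately show ?thesis by simp
  qed
  have "Bi \<in> pd_mats n" using Bc BT pos unfolding pd_mats_def sym_mats_def by simp
  moreover have "det Bi = 1 / det Z"
  proof -
    have "det Z * det Bi = det (1\<^sub>m n)" using det_mult[OF Zc Bc] ZB(1) by simp
    then show ?thesis using dZ by (simp add: field_simps)
  qed
  ultimately show ?thesis using ZB(1) by blast
qed

lemma caseB2: assumes m: "m = Suc n" and n1: "n \<ge> 1" and pos: "\<And>i. i < m \<Longrightarrow> \<pi> i > 0"
  and Z: "Z \<in> pd_mats n"
  and nu: "\<forall>(u,v)\<in>pairs m. bt_lambda \<pi> u v * farris m Z $$ (u,v) \<le> \<nu>"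
  shows "dual_function m \<pi> Z \<nu> \<mu> \<le> simplified_dual_value m \<pi>"
proof -
  have Zc: "Z \<in> carrier_mat n n" by (rule carrier_pd[OF Z])
  have P: "PDf n (\<lambda>i j. Z $$ (i,j))" by (rule pd_PDf[OF Z])
  then have Zsym: "\<forall>i<n. \<forall>j<n. Z $$ (i,j) = Z $$ (j,i)" unfolding PDf_def by auto
  have dZ: "det Z > 0" by (rule pd_det_pos[OF Z])
  obtain Bi where Bpd: "Bi \<in> pd_mats n" and ZB: "Z * Bi = 1\<^sub>m n" and dB: "det Bi = 1 / det Z"
    using inverse_pd[OF Z] by blast
  have Bc: "Bi \<in> carrier_mat n n" by (rule carrier_pd[OF Bpd])
  have trB: "mtrace (Z * Bi) = real n" unfolding ZB mtrace_def by simp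
  have L0: "lagrangian m \<pi> (\<lambda>a b. 0) Bi Z \<nu> \<mu> = ln (det Z) + real n - \<nu>"
    using lagr_formula[OF m Zc Zsym Bc, of \<pi> "\<lambda>a b. 0" \<nu> \<mu>] dB trB dZ by (simp add: ln_div)
  have p0: "(0, n) \<in> pairs m" using m n1 by (simp add: pairs_def)
  have F0: "farris m Z $$ (0, n) = Z $$ (0,0)" using m n1 by (simp add: farris_idx Zt_def)
  have "qf n (\<lambda>i j. Z $$ (i,j)) (\<lambda>i. if i = 0 then 1 else 0) > 0"
    using P n1 unfolding PDf_def by auto
  then have Z00: "Z $$ (0,0) > 0" using qf_delta[of 0 n "\<lambda>i j. Z $$ (i,j)"] n1 by simp
  have lp: "bt_lambda \<pi> 0 n > 0" using lam_pos[of 0 m n \<pi>] pos m by simp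
  have "bt_lambda \<pi> 0 n * farris m Z $$ (0, n) \<le> \<nu>" using nu p0 by auto
  then have nu_pos: "\<nu> > 0" using F0 Z00 lp by (metis mult_pos_pos order_less_le_trans)
  define c where "c = real n / \<nu>"
  have c: "c > 0" using n1 nu_pos unfolding c_def by simp
  define Z' where "Z' = c \<cdot>\<^sub>m Z"
  have Z'c: "Z' \<in> carrier_mat n n" using Zc unfolding Z'_def by simp
  have Z'e: "Z' $$ (i,j) = c * Z $$ (i,j)" if "i < n" "j < n" for i j
    using that Zc unfolding Z'_def by simp
  have Z'pd: "Z' \<in> pd_mats n"
  proof (rule PDf_pd[OF Z'c])
    have qs: "qf n (\<lambda>i j. Z' $$ (i,j)) y = c * qf n (\<lambda>i j. Z $$ (i,j)) y" for y
      unfolding qf_def sum_distrib_left by (intro sum.cong refl) (simp add: Z'e mult_ac)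
    show "PDf n (\<lambda>i j. Z' $$ (i,j))" using P c unfolding PDf_def qs by (auto simp: Z'e)
  qed
  have dZ': "det Z' = c ^ n * det Z" unfolding Z'_def using Zc by simp
  let ?G = "farris m Z'"
  have GCND: "?G \<in> CND_cone m" using farris_CND[OF Z'pd] m by simp
  have Gsc: "?G $$ (a,b) = c * farris m Z $$ (a,b)" if "a < m" "b < m" for a b
    using that m Z'e by (simp add: farris_idx Zt_def algebra_simps)
  have key: "c * farris m Z $$ (a,b) \<le> real n / bt_lambda \<pi> a b" if "a < b" "b < m" for a b
  proof -
    have ab: "(a,b) \<in> pairs m" using that by (simp add: pairs_def)
    have lpab: "bt_lambda \<pi> a b > 0" using lam_pos[of a m b \<pi>] pos that by simp
    have "bt_lambda \<pi> a b * farris m Z $$ (a,b) \<le> \<nu>" using nu ab by auto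
    then have "real n * (bt_lambda \<pi> a b * farris m Z $$ (a,b)) \<le> real n * \<nu>"
      by (rule mult_left_mono) simp
    then show ?thesis unfolding c_def using lpab nu_pos by (simp add: field_simps)
  qed
  have Gle: "\<forall>u<m. \<forall>v<m. ?G $$ (u,v) \<le> Gamma_bar m \<pi> $$ (u,v)"
  proof (intro allI impI)
    fix u v assume uv: "u < m" "v < m"
    show "?G $$ (u,v) \<le> Gamma_bar m \<pi> $$ (u,v)"
    proof (cases "u = v")
      case True then show ?thesis using uv by (simp add: farris_def Gamma_bar_def)
    next
      case False
      have Gb: "Gamma_bar m \<pi> $$ (u,v) = real n / bt_lambda \<pi> u v" using uv False m
        by (simp add: Gamma_bar_def)
      show ?thesis
      proof (cases "u < v")
        case True then show ?thesis using key[of u v] Gsc[OF uv] uv Gb by simp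
      next
        case False
        then have "v < u" using \<open>u \<noteq> v\<close> by simp
        have "farris m Z $$ (u,v) = farris m Z $$ (v,u)" using uv m
          by (simp add: farris_idx Zt_sym[OF Zsym, of u v])
        then show ?thesis using key[of v u] Gsc[OF uv] uv Gb \<open>v < u\<close> bt_lambda_sym[of \<pi> u v] by simp
      qed
    qed
  qed
  have S: "logdet (bordered m ?G) \<le> simplified_dual_value m \<pi>"
    unfolding simplified_dual_value_def by (rule SUP_upper) (use GCND Gle in auto)
  have LD: "logdet (bordered m ?G) = ereal (ln (det Z'))"
    using det_bordered[OF Z'c] m pd_det_pos[OF Z'pd] by (simp add: logdet_def)
  have lnZ': "ln (det Z') = real n * ln c + ln (det Z)" unfolding dZ' using c dZ
    by (simp add: ln_mult ln_realpow)
  have ineq: "ln (det Z) + real n - \<nu> \<le> real n * ln c + ln (det Z)"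
  proof -
    have "ln (\<nu> / real n) \<le> \<nu> / real n - 1" using nu_pos n1 by (intro ln_le_minus_one) simp
    then have "real n * ln (\<nu> / real n) \<le> real n * (\<nu> / real n - 1)" by (rule mult_left_mono) simp
    also have "\<dots> = \<nu> - real n" using n1 by (simp add: field_simps)
    finally have a: "real n * ln (\<nu> / real n) \<le> \<nu> - real n" .
    have "ln c = - ln (\<nu> / real n)" unfolding c_def using nu_pos n1 by (simp add: ln_div)
    then show ?thesis using a by simp
  qed
  have "dual_function m \<pi> Z \<nu> \<mu> \<le> ereal (lagrangian m \<pi> (\<lambda>a b. 0) Bi Z \<nu> \<mu>)"
    using dual_le[of Bi m \<pi> Z \<nu> \<mu> "\<lambda>a b. 0"] Bpd m by simp
  also have "\<dots> \<le> ereal (ln (det Z'))" unfolding L0 lnZ' using ineq by simp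
  also have "\<dots> \<le> simplified_dual_value m \<pi>" using S LD by simp
  finally show ?thesis .
qed

theorem corollary4p1:
  fixes m :: nat and \<pi> :: "nat \<Rightarrow> real"
  assumes "m \<ge> 2" and "\<And>i. i < m \<Longrightarrow> \<pi> i > 0"
  shows "lagrange_dual_value m \<pi> = simplified_dual_value m \<pi>"
proof -
  obtain n where m: "m = Suc n" and n1: "n \<ge> 1" using assms(1) by (cases m) auto
  have mn: "m - 1 = n" using m by simp
  have le: "lagrange_dual_value m \<pi> \<le> simplified_dual_value m \<pi>"
    unfolding lagrange_dual_value_def
  proof (rule SUP_least)
    fix d :: "real mat \<times> real \<times> (nat \<Rightarrow> nat \<Rightarrow> real)" assume d: "d \<in> {(Z, \<nu>, \<mu>). Z \<in> sym_mats (m - 1) \<and> (\<forall>(u, v)\<in>pairs m. 0 \<le> \<mu> u v)}"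
    obtain Z :: "real mat" and \<nu> :: real and \<mu> :: "nat \<Rightarrow> nat \<Rightarrow> real" where dd: "d = (Z, \<nu>, \<mu>)" by (cases d) auto
    have Zs: "Z \<in> sym_mats n" and mu0: "\<forall>(u,v)\<in>pairs m. 0 \<le> \<mu> u v" using d dd mn by auto
    have "dual_function m \<pi> Z \<nu> \<mu> \<le> simplified_dual_value m \<pi>"
    proof (cases "\<exists>(u,v)\<in>pairs m. \<nu> < bt_lambda \<pi> u v * farris m Z $$ (u,v)")
      case True
      then obtain u v where uv: "(u,v) \<in> pairs m" "\<nu> < bt_lambda \<pi> u v * farris m Z $$ (u,v)" by auto
      show ?thesis using caseA[OF m Zs mu0 uv] by simp
    next
      case False
      then have nu: "\<forall>(u,v)\<in>pairs m. bt_lambda \<pi> u v * farris m Z $$ (u,v) \<le> \<nu>" by auto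
      show ?thesis
      proof (cases "Z \<in> pd_mats n")
        case True
        show ?thesis by (rule caseB2[OF m n1 assms(2) True nu])
      next
        case False
        show ?thesis using caseB1[OF m Zs False] by simp
      qed
    qed
    then show "dual_function m \<pi> (fst d) (fst (snd d)) (snd (snd d)) \<le> simplified_dual_value m \<pi>"
      using dd by simp
  qed
  have ge: "simplified_dual_value m \<pi> \<le> lagrange_dual_value m \<pi>"
    unfolding simplified_dual_value_def
  proof (rule SUP_least)
    fix G assume G: "G \<in> {G \<in> CND_cone m. \<forall>u<m. \<forall>v<m. G $$ (u,v) \<le> Gamma_bar m \<pi> $$ (u,v)}"
    show "logdet (bordered m G) \<le> lagrange_dual_value m \<pi>"
    proof (cases "det (bordered m G) > 0")
      case False then show ?thesis by (simp add: logdet_def)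
    next
      case True
      obtain Z where Z: "Z \<in> pd_mats n" "farris (Suc n) Z = G" using CND_farris[of G n] G m by auto
      have Zc: "Z \<in> carrier_mat n n" by (rule carrier_pd[OF Z(1)])
      have Zsym: "\<forall>i<n. \<forall>j<n. Z $$ (i,j) = Z $$ (j,i)" using pd_PDf[OF Z(1)] unfolding PDf_def by auto
      define \<mu> where "\<mu> = (\<lambda>a b. real n - bt_lambda \<pi> a b * G $$ (a,b))"
      have mu0: "\<forall>(u,v)\<in>pairs m. 0 \<le> \<mu> u v"
      proof (intro ballI)
        fix p assume p: "p \<in> pairs m"
        obtain a b where pab: "p = (a,b)" by (cases p)
        have ab: "a < b" "b < m" using p pab by (auto simp: pairs_def)
        have lpab: "bt_lambda \<pi> a b > 0" using lam_pos[of a m b \<pi>] assms(2) ab by simp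
        have "G $$ (a,b) \<le> Gamma_bar m \<pi> $$ (a,b)" using G ab by auto
        also have "\<dots> = real n / bt_lambda \<pi> a b" using ab m by (simp add: Gamma_bar_def)
        finally have "bt_lambda \<pi> a b * G $$ (a,b) \<le> real n" using lpab by (simp add: field_simps)
        then show "case p of (u,v) \<Rightarrow> 0 \<le> \<mu> u v" unfolding pab \<mu>_def by simp
      qed
      have Zsm: "Z \<in> sym_mats (m - 1)" using Z(1) mn unfolding pd_mats_def by simp
      have "ereal (ln (det Z)) \<le> dual_function m \<pi> Z (real n) \<mu>"
        unfolding dual_function_def
      proof (rule INF_greatest)
        fix wX :: "(nat \<Rightarrow> nat \<Rightarrow> real) \<times> real mat" assume "wX \<in> UNIV \<times> pd_mats (m - 1)"
        then obtain w X where wX: "wX = (w,X)" "X \<in> pd_mats n" using mn by (cases wX) auto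
        have Xc: "X \<in> carrier_mat n n" by (rule carrier_pd[OF wX(2)])
        have z: "(\<Sum>(a,b)\<in>pairs m. w a b * (real n - \<mu> a b - bt_lambda \<pi> a b * farris m Z $$ (a,b))) = 0"
          using Z(2) m by (intro sum.neutral) (auto simp: \<mu>_def)
        have "lagrangian m \<pi> w X Z (real n) \<mu> = - ln (det X) + mtrace (Z * X) - real n"
          using lagr_formula[OF m Zc Zsym Xc, of \<pi> w "real n" \<mu>] z by simp
        moreover have "ln (det Z) + ln (det X) \<le> mtrace (Z * X) - real n" by (rule KL[OF Z(1) wX(2)])
        ultimately show "ereal (ln (det Z)) \<le> ereal (lagrangian m \<pi> (fst wX) (snd wX) Z (real n) \<mu>)"
          using wX(1) by simp
      qed
      also have "\<dots> \<le> lagrange_dual_value m \<pi>"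
        unfolding lagrange_dual_value_def
        by (rule SUP_upper2[of "(Z, real n, \<mu>)"]) (use Zsm mu0 in auto)
      finally have "ereal (ln (det Z)) \<le> lagrange_dual_value m \<pi>" .
      moreover have "det (bordered m G) = det Z" using det_bordered[OF Zc] Z(2) m by simp
      ultimately show ?thesis using True by (simp add: logdet_def)
    qed
  qed
  show ?thesis using le ge by (rule antisym)
qed

end
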